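(* Let $\mathbf{X}\sim\mathcal{MSP}(\boldsymbol{\mu},\mathbf{K})$ be a $p$-variate $L^2$-continuous process on a compact interval $\mathcal{T}$ with uncorrelated components $X_j\in L^2(\mathcal{T})$, $j=1,\dots,p$, so that $\mathbf{K}=\mathrm{diag}(\kappa_1,\dots,\kappa_p)$ and the covariance operator is $\mathcal{C}=\mathrm{diag}(\mathcal{K}_1,\dots,\mathcal{K}_p)$, where $\mathcal{K}_j$ is the integral operator with kernel $\kappa_j$. Let $\pi_1\ge\dots\ge\pi_M>\pi_{M+1}$ be the $M$ largest eigenvalues of $\mathcal{C}$ (with $\pi_M>0$). For $j=1,\dots,p$ let $(\lambda_i^{(j)},\xi_i^{(j)})$, $i\ge1$, be the eigenpairs of $\mathcal{K}_j$ with $\lambda^{(j)}_1\ge\lambda^{(j)}_2\ge\cdots$, and let $m_j=|\{\lambda_1^{(j)},\dots,\lambda_M^{(j)}\}\cap\{\pi_1,\dots,\pi_M\}|$ be the number of eigenvalues of $\mathcal{K}_j$ belonging to $\{\pi_1,\dots,\pi_M\}$, counting multiplicities in $\{\lambda_1^{(j)},\dots,\lambda_M^{(j)}\}$. Then, for $M=m_1+\dots+m_p$, $$\mathrm{fMMD}^2(\mathbf{X},\boldsymbol{\mu};\mathbf{K},M)=\sum_{j=1}^p\mathrm{fmd}^2(X_j,\mu_j;\kappa_j,m_j).$$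
   Context: $\mathcal{H}=L^2(\mathcal{T})^p$ with inner product $\langle\mathbf{x},\mathbf{y}\rangle=\sum_j\int_{\mathcal{T}}x_jy_j$. For a $p$-variate $L^2$-continuous process $\mathbf{X}$ with mean $\boldsymbol{\mu}(t)=E\mathbf{X}(t)$ and covariance kernel $\mathbf{K}(s,t)=[\mathrm{Cov}(X_i(s),X_j(t))]$ (written $\mathbf{X}\sim\mathcal{MSP}(\boldsymbol{\mu},\mathbf{K})$), the covariance operator is $\mathcal{C}\mathbf{x}(s)=\int\mathbf{K}(s,t)\mathbf{x}(t)dt$ with orthonormal eigenfunctions $\boldsymbol{\psi}_k$ and nonincreasing eigenvalues $\pi_k$; for $\pi_M>0$, $\mathrm{fMMD}^2(\mathbf{X},\boldsymbol{\mu};\mathbf{K},M)=\sum_{k=1}^M\pi_k^{-1}\langle\mathbf{X}-\boldsymbol{\mu},\boldsymbol{\psi}_k\rangle^2$. For a univariate process $X\in L^2(\mathcal{T})$ with mean $\mu$ and covariance kernel $\kappa$, with eigenpairs $(\lambda_i,\xi_i)$ of the integral operator with kernel $\kappa$ ($\lambda_1\ge\dots\ge\lambda_m>0$), $\mathrm{fmd}^2(X,\mu;\kappa,m)=\sum_{i=1}^m\lambda_i^{-1}\langle X-\mu,\xi_i\rangle^2$ with $\langle f,g\rangle=\int_{\mathcal{T}}fg$. *)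

theory Defs
  imports "HOL-Probability.Probability"
begin

definition L2 :: "real set \<Rightarrow> (real \<Rightarrow> real) \<Rightarrow> bool" where
  "L2 T f \<longleftrightarrow> f \<in> borel_measurable (lebesgue_on T)
      \<and> integrable (lebesgue_on T) (\<lambda>t. (f t)\<^sup>2)"

definition ip1 :: "real set \<Rightarrow> (real \<Rightarrow> real) \<Rightarrow> (real \<Rightarrow> real) \<Rightarrow> real" where
  "ip1 T f g = (\<integral>t. f t * g t \<partial>(lebesgue_on T))"

definition intop :: "real set \<Rightarrow> (real \<Rightarrow> real \<Rightarrow> real) \<Rightarrow> (real \<Rightarrow> real) \<Rightarrow> real \<Rightarrow> real" where
  "intop T \<kappa> f s = (\<integral>t. \<kappa> s t * f t \<partial>(lebesgue_on T))"

text \<open>(lam, xi) (indexed from 0) is the sequence of eigenpairs of the integral operator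
  with kernel kappa, with nonincreasing eigenvalues: the xi i are orthonormal
  eigenfunctions with eigenvalues lam i, and they exhaust the eigendecomposition
  (every element orthogonal to all xi i lies in the kernel of the operator).\<close>
definition eigensys1 :: "real set \<Rightarrow> (real \<Rightarrow> real \<Rightarrow> real) \<Rightarrow> (nat \<Rightarrow> real) \<Rightarrow> (nat \<Rightarrow> real \<Rightarrow> real) \<Rightarrow> bool" where
  "eigensys1 T \<kappa> lam xi \<longleftrightarrow>
     (\<forall>i. L2 T (xi i)) \<and>
     (\<forall>i k. ip1 T (xi i) (xi k) = (if i = k then 1 else 0)) \<and>
     (\<forall>i. \<forall>s\<in>T. intop T \<kappa> (xi i) s = lam i * xi i s) \<and>
     decseq lam \<and>
     (\<forall>f. L2 T f \<longrightarrow> (\<forall>i. ip1 T f (xi i) = 0) \<longrightarrow> (\<forall>s\<in>T. intop T \<kappa> f s = 0))"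

definition fmd2 :: "real set \<Rightarrow> (real \<Rightarrow> real) \<Rightarrow> (real \<Rightarrow> real) \<Rightarrow> (nat \<Rightarrow> real) \<Rightarrow> (nat \<Rightarrow> real \<Rightarrow> real) \<Rightarrow> nat \<Rightarrow> real" where
  "fmd2 T x \<mu> lam xi m = (\<Sum>i<m. (ip1 T (\<lambda>t. x t - \<mu> t) (xi i))\<^sup>2 / lam i)"

text \<open>Elements of H are represented as x :: nat => real => real, component j (j < p) being x j.\<close>
definition inH :: "nat \<Rightarrow> real set \<Rightarrow> (nat \<Rightarrow> real \<Rightarrow> real) \<Rightarrow> bool" where
  "inH p T x \<longleftrightarrow> (\<forall>j<p. L2 T (x j))"

definition ipH :: "nat \<Rightarrow> real set \<Rightarrow> (nat \<Rightarrow> real \<Rightarrow> real) \<Rightarrow> (nat \<Rightarrow> real \<Rightarrow> real) \<Rightarrow> real" where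
  "ipH p T x y = (\<Sum>j<p. ip1 T (x j) (y j))"

definition covop :: "nat \<Rightarrow> real set \<Rightarrow> (nat \<Rightarrow> nat \<Rightarrow> real \<Rightarrow> real \<Rightarrow> real) \<Rightarrow> (nat \<Rightarrow> real \<Rightarrow> real) \<Rightarrow> nat \<Rightarrow> real \<Rightarrow> real" where
  "covop p T K x i s = (\<Sum>j<p. \<integral>t. K i j s t * x j t \<partial>(lebesgue_on T))"

definition eigensysH :: "nat \<Rightarrow> real set \<Rightarrow> (nat \<Rightarrow> nat \<Rightarrow> real \<Rightarrow> real \<Rightarrow> real) \<Rightarrow> (nat \<Rightarrow> real) \<Rightarrow> (nat \<Rightarrow> nat \<Rightarrow> real \<Rightarrow> real) \<Rightarrow> bool" where
  "eigensysH p T K \<pi>s psi \<longleftrightarrow>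
     (\<forall>k. inH p T (psi k)) \<and>
     (\<forall>k l. ipH p T (psi k) (psi l) = (if k = l then 1 else 0)) \<and>
     (\<forall>k. \<forall>i<p. \<forall>s\<in>T. covop p T K (psi k) i s = \<pi>s k * psi k i s) \<and>
     decseq \<pi>s \<and>
     (\<forall>x. inH p T x \<longrightarrow> (\<forall>k. ipH p T x (psi k) = 0) \<longrightarrow>
          (\<forall>i<p. \<forall>s\<in>T. covop p T K x i s = 0))"

definition fMMD2 :: "nat \<Rightarrow> real set \<Rightarrow> (nat \<Rightarrow> real \<Rightarrow> real) \<Rightarrow> (nat \<Rightarrow> real \<Rightarrow> real) \<Rightarrow> (nat \<Rightarrow> real) \<Rightarrow> (nat \<Rightarrow> nat \<Rightarrow> real \<Rightarrow> real) \<Rightarrow> nat \<Rightarrow> real" where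
  "fMMD2 p T x \<mu> \<pi>s psi M =
     (\<Sum>k<M. (ipH p T (\<lambda>j t. x j t - \<mu> j t) (psi k))\<^sup>2 / \<pi>s k)"

text \<open>X w j t = value of component j at time t for the sample point w.\<close>
definition mean_fun :: "'w measure \<Rightarrow> ('w \<Rightarrow> nat \<Rightarrow> real \<Rightarrow> real) \<Rightarrow> nat \<Rightarrow> real \<Rightarrow> real" where
  "mean_fun P X j t = (\<integral>w. X w j t \<partial>P)"

definition cov_kernel :: "'w measure \<Rightarrow> ('w \<Rightarrow> nat \<Rightarrow> real \<Rightarrow> real) \<Rightarrow> nat \<Rightarrow> nat \<Rightarrow> real \<Rightarrow> real \<Rightarrow> real" where
  "cov_kernel P X i j s t =
     (\<integral>w. (X w i s - mean_fun P X i s) * (X w j t - mean_fun P X j t) \<partial>P)"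

definition L2_cont_process :: "'w measure \<Rightarrow> nat \<Rightarrow> real set \<Rightarrow> ('w \<Rightarrow> nat \<Rightarrow> real \<Rightarrow> real) \<Rightarrow> bool" where
  "L2_cont_process P p T X \<longleftrightarrow>
     prob_space P \<and>
     (\<forall>j<p. \<forall>t\<in>T. (\<lambda>w. X w j t) \<in> borel_measurable P
                  \<and> integrable P (\<lambda>w. (X w j t)\<^sup>2)) \<and>
     (\<forall>j<p. \<forall>t\<in>T. ((\<lambda>s. \<integral>w. (X w j s - X w j t)\<^sup>2 \<partial>P) \<longlongrightarrow> 0) (at t within T)) \<and>
     (\<forall>w\<in>space P. inH p T (X w))"

end

theory Submission
  imports Defs
begin


lemma lmeas_ab: "{a..b::real} \<in> lmeasurable" by simp

lemma fm_ab: "finite_measure (lebesgue_on {a..b::real})"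
  by (rule finite_measure_lebesgue_on) simp

lemma abs_mult_le_sq: "\<bar>x * y\<bar> \<le> x\<^sup>2 + (y::real)\<^sup>2"
proof -
  have "0 \<le> (\<bar>x\<bar> - \<bar>y\<bar>)\<^sup>2" by simp
  hence "2 * \<bar>x\<bar> * \<bar>y\<bar> \<le> x\<^sup>2 + y\<^sup>2" by (simp add: power2_eq_square algebra_simps)
  moreover have "\<bar>x*y\<bar> = \<bar>x\<bar> * \<bar>y\<bar>" by (simp add: abs_mult)
  moreover have "0 \<le> x\<^sup>2 + y\<^sup>2" by simp
  ultimately show ?thesis by linarith
qed

lemma L2_integrable: "L2 {a..b} f \<Longrightarrow> integrable (lebesgue_on {a..b}) f"
  unfolding L2_def using finite_measure.square_integrable_imp_integrable[OF fm_ab] by blast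

lemma L2_mult: "L2 {a..b} f \<Longrightarrow> L2 {a..b} g \<Longrightarrow> integrable (lebesgue_on {a..b}) (\<lambda>t. f t * g t)"
proof -
  assume f: "L2 {a..b} f" and g: "L2 {a..b} g"
  have i: "integrable (lebesgue_on {a..b}) (\<lambda>t. (f t)\<^sup>2 + (g t)\<^sup>2)"
    using f g unfolding L2_def by (metis Bochner_Integration.integrable_add)
  show ?thesis
  proof (rule Bochner_Integration.integrable_bound[OF i])
    show "(\<lambda>t. f t * g t) \<in> borel_measurable (lebesgue_on {a..b})"
      using f g unfolding L2_def by (metis borel_measurable_times)
    show "AE x in lebesgue_on {a..b}. norm (f x * g x) \<le> norm ((f x)\<^sup>2 + (g x)\<^sup>2)"
    proof (rule AE_I2)
      fix x
      have "0 \<le> (f x)\<^sup>2 + (g x)\<^sup>2" by simp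
      thus "norm (f x * g x) \<le> norm ((f x)\<^sup>2 + (g x)\<^sup>2)" using abs_mult_le_sq[of "f x" "g x"] by simp
    qed
  qed
qed

lemma sq_diff_le: "(x - y)\<^sup>2 \<le> 2*x\<^sup>2 + 2*(y::real)\<^sup>2"
proof -
  have "0 \<le> (x + y)\<^sup>2" by simp
  thus ?thesis by (simp add: power2_eq_square algebra_simps)
qed

lemma sq_diff_le_norm: "norm ((x - y)\<^sup>2) \<le> norm (2*x\<^sup>2 + 2*(y::real)\<^sup>2)"
proof -
  have "0 \<le> 2*x\<^sup>2 + 2*y\<^sup>2" by simp
  thus ?thesis using sq_diff_le[of x y] by simp
qed

lemma L2_cong: "L2 {a..b} f \<Longrightarrow> (\<And>t. t \<in> {a..b} \<Longrightarrow> f t = g t) \<Longrightarrow> L2 {a..b} g"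
proof -
  assume f: "L2 {a..b} f" and eq: "\<And>t. t \<in> {a..b} \<Longrightarrow> f t = g t"
  have fm: "f \<in> borel_measurable (lebesgue_on {a..b})" and fi: "integrable (lebesgue_on {a..b}) (\<lambda>t. (f t)\<^sup>2)"
    using f unfolding L2_def by auto
  have "(f \<in> borel_measurable (lebesgue_on {a..b})) = (g \<in> borel_measurable (lebesgue_on {a..b}))"
    by (rule measurable_cong) (simp add: eq)
  hence m: "g \<in> borel_measurable (lebesgue_on {a..b})" using fm by blast
  have "integrable (lebesgue_on {a..b}) (\<lambda>t. (f t)\<^sup>2) = integrable (lebesgue_on {a..b}) (\<lambda>t. (g t)\<^sup>2)"
    by (rule Bochner_Integration.integrable_cong) (simp_all add: eq)
  hence i: "integrable (lebesgue_on {a..b}) (\<lambda>t. (g t)\<^sup>2)" using fi by blast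
  show ?thesis using m i unfolding L2_def by blast
qed

lemma L2_diff: "L2 {a..b} f \<Longrightarrow> L2 {a..b} g \<Longrightarrow> L2 {a..b} (\<lambda>t. f t - g t)"
proof -
  assume f: "L2 {a..b} f" and g: "L2 {a..b} g"
  have m: "(\<lambda>t. f t - g t) \<in> borel_measurable (lebesgue_on {a..b})"
    using f g unfolding L2_def by (metis borel_measurable_diff)
  have i: "integrable (lebesgue_on {a..b}) (\<lambda>t. 2*(f t)\<^sup>2 + 2*(g t)\<^sup>2)"
    using f g unfolding L2_def by (metis Bochner_Integration.integrable_add integrable_mult_right)
  have "integrable (lebesgue_on {a..b}) (\<lambda>t. (f t - g t)\<^sup>2)"
  proof (rule Bochner_Integration.integrable_bound[OF i])
    show "(\<lambda>t. (f t - g t)\<^sup>2) \<in> borel_measurable (lebesgue_on {a..b})" using m by (rule borel_measurable_power)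
    show "AE x in lebesgue_on {a..b}. norm ((f x - g x)\<^sup>2) \<le> norm (2 * (f x)\<^sup>2 + 2 * (g x)\<^sup>2)"
      by (rule AE_I2) (rule sq_diff_le_norm)
  qed
  thus ?thesis using m unfolding L2_def by blast
qed

lemma L2_scale: "L2 {a..b} f \<Longrightarrow> L2 {a..b} (\<lambda>t. c * f t)"
  unfolding L2_def by (auto simp: power_mult_distrib)

lemma L2_zero: "L2 {a..b} (\<lambda>t. 0)"
  unfolding L2_def by simp

lemma L2_add: "L2 {a..b} f \<Longrightarrow> L2 {a..b} g \<Longrightarrow> L2 {a..b} (\<lambda>t. f t + g t)"
proof -
  assume f: "L2 {a..b} f" and g: "L2 {a..b} g"
  have "L2 {a..b} (\<lambda>t. (-1) * g t)" by (rule L2_scale[OF g])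
  hence "L2 {a..b} (\<lambda>t. f t - (-1) * g t)" by (rule L2_diff[OF f])
  thus ?thesis by simp
qed

lemma L2_sum: "finite F \<Longrightarrow> (\<And>k. k \<in> F \<Longrightarrow> L2 {a..b} (f k)) \<Longrightarrow> L2 {a..b} (\<lambda>t. \<Sum>k\<in>F. f k t)"
proof (induction F rule: finite_induct)
  case empty thus ?case by (simp add: L2_zero)
next
  case (insert x F)
  have "L2 {a..b} (\<lambda>t. f x t + (\<Sum>k\<in>F. f k t))"
    by (rule L2_add) (use insert in auto)
  thus ?case using insert(1,2) by simp
qed

lemma ip1_cong: "(\<And>t. t \<in> T \<Longrightarrow> f t = f' t) \<Longrightarrow> ip1 T f g = ip1 T f' g"
  unfolding ip1_def by (rule Bochner_Integration.integral_cong) auto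

lemma ip1_cong2: "(\<And>t. t \<in> T \<Longrightarrow> g t = g' t) \<Longrightarrow> ip1 T f g = ip1 T f g'"
  unfolding ip1_def by (rule Bochner_Integration.integral_cong) auto

lemma ip1_sym: "ip1 T f g = ip1 T g f"
  unfolding ip1_def by (simp add: mult.commute)

lemma ip1_zero: "ip1 T (\<lambda>t. 0) g = 0"
  unfolding ip1_def by simp

lemma ip1_diff: "L2 {a..b} f \<Longrightarrow> L2 {a..b} h \<Longrightarrow> L2 {a..b} g \<Longrightarrow>
   ip1 {a..b} (\<lambda>t. f t - h t) g = ip1 {a..b} f g - ip1 {a..b} h g"
  unfolding ip1_def left_diff_distrib
  by (rule Bochner_Integration.integral_diff) (rule L2_mult, assumption+)+

lemma ip1_lc: "finite F \<Longrightarrow> (\<And>k. k \<in> F \<Longrightarrow> L2 {a..b} (f k)) \<Longrightarrow> L2 {a..b} g \<Longrightarrow>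
   ip1 {a..b} (\<lambda>t. \<Sum>k\<in>F. c k * f k t) g = (\<Sum>k\<in>F. c k * ip1 {a..b} (f k) g)"
proof -
  assume F: "finite F" and f: "\<And>k. k \<in> F \<Longrightarrow> L2 {a..b} (f k)" and g: "L2 {a..b} g"
  have "ip1 {a..b} (\<lambda>t. \<Sum>k\<in>F. c k * f k t) g = (\<integral>t. (\<Sum>k\<in>F. c k * (f k t * g t)) \<partial>lebesgue_on {a..b})"
    unfolding ip1_def by (simp add: sum_distrib_right mult.assoc)
  also have "\<dots> = (\<Sum>k\<in>F. (\<integral>t. c k * (f k t * g t) \<partial>lebesgue_on {a..b}))"
    by (rule Bochner_Integration.integral_sum) (use L2_mult[OF f g] in auto)
  also have "\<dots> = (\<Sum>k\<in>F. c k * ip1 {a..b} (f k) g)"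
    unfolding ip1_def by simp
  finally show ?thesis .
qed

lemma ip1_self_nonneg: "0 \<le> ip1 T f f"
  unfolding ip1_def by (intro integral_nonneg_AE AE_I2) simp



lemma ipH_cong: "(\<And>j t. j < p \<Longrightarrow> t \<in> T \<Longrightarrow> x j t = x' j t) \<Longrightarrow> ipH p T x y = ipH p T x' y"
  unfolding ipH_def by (intro sum.cong refl ip1_cong) auto

lemma ipH_cong2: "(\<And>j t. j < p \<Longrightarrow> t \<in> T \<Longrightarrow> y j t = y' j t) \<Longrightarrow> ipH p T x y = ipH p T x y'"
  unfolding ipH_def by (intro sum.cong refl ip1_cong2) auto

lemma ipH_sym: "ipH p T x y = ipH p T y x"
  unfolding ipH_def by (simp add: ip1_sym)

lemma ip1_scale: "ip1 T (\<lambda>t. c * f t) g = c * ip1 T f g"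
  unfolding ip1_def by (simp add: mult.assoc)

lemma ipH_scale: "ipH p T (\<lambda>j t. c * x j t) y = c * ipH p T x y"
  unfolding ipH_def by (simp add: ip1_scale sum_distrib_left)

lemma ipH_scale2: "ipH p T x (\<lambda>j t. c * y j t) = c * ipH p T x y"
  using ipH_scale[of p T c y x] by (simp add: ipH_sym)

lemma inH_diff: "inH p {a..b} x \<Longrightarrow> inH p {a..b} z \<Longrightarrow> inH p {a..b} (\<lambda>j t. x j t - z j t)"
  unfolding inH_def by (simp add: L2_diff)

lemma inH_lc: "finite F \<Longrightarrow> (\<And>k. k \<in> F \<Longrightarrow> inH p {a..b} (v k)) \<Longrightarrow>
   inH p {a..b} (\<lambda>j t. \<Sum>k\<in>F. c k * v k j t)"
  unfolding inH_def
proof (intro allI impI)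
  fix j assume F: "finite F" and v: "\<And>k. k \<in> F \<Longrightarrow> \<forall>j<p. L2 {a..b} (v k j)" and j: "j < p"
  show "L2 {a..b} (\<lambda>t. \<Sum>k\<in>F. c k * v k j t)"
    by (rule L2_sum[OF F]) (use v j L2_scale in blast)
qed

lemma ipH_diff: "inH p {a..b} x \<Longrightarrow> inH p {a..b} z \<Longrightarrow> inH p {a..b} y \<Longrightarrow>
   ipH p {a..b} (\<lambda>j t. x j t - z j t) y = ipH p {a..b} x y - ipH p {a..b} z y"
  unfolding ipH_def inH_def by (simp add: ip1_diff sum_subtractf)

lemma ipH_lc: "finite F \<Longrightarrow> (\<And>k. k \<in> F \<Longrightarrow> inH p {a..b} (v k)) \<Longrightarrow> inH p {a..b} y \<Longrightarrow>
   ipH p {a..b} (\<lambda>j t. \<Sum>k\<in>F. c k * v k j t) y = (\<Sum>k\<in>F. c k * ipH p {a..b} (v k) y)"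
proof -
  assume F: "finite F" and v: "\<And>k. k \<in> F \<Longrightarrow> inH p {a..b} (v k)" and y: "inH p {a..b} y"
  have "ipH p {a..b} (\<lambda>j t. \<Sum>k\<in>F. c k * v k j t) y = (\<Sum>j<p. \<Sum>k\<in>F. c k * ip1 {a..b} (v k j) (y j))"
    unfolding ipH_def
  proof (rule sum.cong[OF refl])
    fix j assume "j \<in> {..<p}"
    thus "ip1 {a..b} (\<lambda>t. \<Sum>k\<in>F. c k * v k j t) (y j) = (\<Sum>k\<in>F. c k * ip1 {a..b} (v k j) (y j))"
      using v y F by (intro ip1_lc) (auto simp: inH_def)
  qed
  also have "\<dots> = (\<Sum>k\<in>F. c k * ipH p {a..b} (v k) y)"
    unfolding ipH_def by (simp add: sum_distrib_left sum.swap[of _ F])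
  finally show ?thesis .
qed

lemma ipH_self_nonneg: "0 \<le> ipH p T x x"
  unfolding ipH_def by (intro sum_nonneg ip1_self_nonneg)

lemma covop_lin:
  assumes Hint: "\<forall>x. inH p {a..b} x \<longrightarrow> (\<forall>i<p. \<forall>j<p. \<forall>s\<in>{a..b}. integrable (lebesgue_on {a..b}) (\<lambda>t. K i j s t * x j t))"
    and F: "finite F" and v: "\<And>k. k \<in> F \<Longrightarrow> inH p {a..b} (v k)" and u: "inH p {a..b} u"
    and i: "i < p" and s: "s \<in> {a..b}"
  shows "covop p {a..b} K (\<lambda>j t. u j t - (\<Sum>k\<in>F. c k * v k j t)) i s
       = covop p {a..b} K u i s - (\<Sum>k\<in>F. c k * covop p {a..b} K (v k) i s)"
proof -
  have "covop p {a..b} K (\<lambda>j t. u j t - (\<Sum>k\<in>F. c k * v k j t)) i s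
      = (\<Sum>j<p. (\<integral>t. K i j s t * u j t \<partial>lebesgue_on {a..b}) - (\<Sum>k\<in>F. c k * (\<integral>t. K i j s t * v k j t \<partial>lebesgue_on {a..b})))"
    unfolding covop_def
  proof (rule sum.cong[OF refl])
    fix j assume j: "j \<in> {..<p}"
    have iu: "integrable (lebesgue_on {a..b}) (\<lambda>t. K i j s t * u j t)" using Hint u i j s by auto
    have iv: "\<And>k. k \<in> F \<Longrightarrow> integrable (lebesgue_on {a..b}) (\<lambda>t. c k * (K i j s t * v k j t))"
      using Hint v i j s by auto
    have "(\<integral>t. K i j s t * (u j t - (\<Sum>k\<in>F. c k * v k j t)) \<partial>lebesgue_on {a..b})
        = (\<integral>t. K i j s t * u j t - (\<Sum>k\<in>F. c k * (K i j s t * v k j t)) \<partial>lebesgue_on {a..b})"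
      by (simp add: right_diff_distrib sum_distrib_left mult.left_commute)
    also have "\<dots> = (\<integral>t. K i j s t * u j t \<partial>lebesgue_on {a..b}) - (\<integral>t. (\<Sum>k\<in>F. c k * (K i j s t * v k j t)) \<partial>lebesgue_on {a..b})"
      by (rule Bochner_Integration.integral_diff[OF iu]) (rule Bochner_Integration.integrable_sum, rule iv)
    also have "(\<integral>t. (\<Sum>k\<in>F. c k * (K i j s t * v k j t)) \<partial>lebesgue_on {a..b}) = (\<Sum>k\<in>F. c k * (\<integral>t. K i j s t * v k j t \<partial>lebesgue_on {a..b}))"
      by (subst Bochner_Integration.integral_sum) (use iv in simp_all)
    finally show "(\<integral>t. K i j s t * (u j t - (\<Sum>k\<in>F. c k * v k j t)) \<partial>lebesgue_on {a..b})
       = (\<integral>t. K i j s t * u j t \<partial>lebesgue_on {a..b}) - (\<Sum>k\<in>F. c k * (\<integral>t. K i j s t * v k j t \<partial>lebesgue_on {a..b}))" .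
  qed
  also have "\<dots> = covop p {a..b} K u i s - (\<Sum>k\<in>F. c k * covop p {a..b} K (v k) i s)"
    unfolding covop_def by (simp add: sum_subtractf sum_distrib_left sum.swap[of _ F])
  finally show ?thesis .
qed


definition Hint :: "nat \<Rightarrow> real \<Rightarrow> real \<Rightarrow> (nat \<Rightarrow> nat \<Rightarrow> real \<Rightarrow> real \<Rightarrow> real) \<Rightarrow> bool" where
  "Hint p a b K \<longleftrightarrow> (\<forall>x. inH p {a..b} x \<longrightarrow> (\<forall>i<p. \<forall>j<p. \<forall>s\<in>{a..b}. integrable (lebesgue_on {a..b}) (\<lambda>t. K i j s t * x j t)))"

definition Hsym :: "nat \<Rightarrow> real \<Rightarrow> real \<Rightarrow> (nat \<Rightarrow> nat \<Rightarrow> real \<Rightarrow> real \<Rightarrow> real) \<Rightarrow> bool" where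
  "Hsym p a b K \<longleftrightarrow> (\<forall>x y. inH p {a..b} x \<longrightarrow> inH p {a..b} y \<longrightarrow>
     ipH p {a..b} (\<lambda>i s. covop p {a..b} K x i s) y = ipH p {a..b} x (\<lambda>i s. covop p {a..b} K y i s))"

lemma eig_orth:
  assumes eig: "eigensysH p {a..b} K \<pi>s psi" and sym: "Hsym p a b K"
    and u: "inH p {a..b} u" and ueig: "\<forall>i<p. \<forall>s\<in>{a..b}. covop p {a..b} K u i s = lam * u i s"
    and ne: "\<pi>s l \<noteq> lam"
  shows "ipH p {a..b} u (psi l) = 0"
proof -
  have pl: "inH p {a..b} (psi l)" using eig unfolding eigensysH_def by blast
  have pe: "\<forall>i<p. \<forall>s\<in>{a..b}. covop p {a..b} K (psi l) i s = \<pi>s l * psi l i s"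
    using eig unfolding eigensysH_def by blast
  have "lam * ipH p {a..b} u (psi l) = ipH p {a..b} (\<lambda>i s. lam * u i s) (psi l)"
    by (simp add: ipH_scale)
  also have "\<dots> = ipH p {a..b} (\<lambda>i s. covop p {a..b} K u i s) (psi l)"
    by (rule ipH_cong) (use ueig in simp)
  also have "\<dots> = ipH p {a..b} u (\<lambda>i s. covop p {a..b} K (psi l) i s)"
    using sym u pl unfolding Hsym_def by blast
  also have "\<dots> = ipH p {a..b} u (\<lambda>i s. \<pi>s l * psi l i s)"
    by (rule ipH_cong2) (use pe in simp)
  also have "\<dots> = \<pi>s l * ipH p {a..b} u (psi l)"
    by (simp add: ipH_scale2)
  finally have "(lam - \<pi>s l) * ipH p {a..b} u (psi l) = 0" by (simp add: algebra_simps)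
  thus ?thesis using ne by simp
qed

lemma GL:
  assumes eig: "eigensysH p {a..b} K \<pi>s psi" and int: "Hint p a b K" and sym: "Hsym p a b K"
    and lam0: "lam \<noteq> 0" and F: "finite F" and FF: "{k. \<pi>s k = lam} \<subseteq> F"
    and u: "inH p {a..b} u" and ueig: "\<forall>i<p. \<forall>s\<in>{a..b}. covop p {a..b} K u i s = lam * u i s"
  shows "\<forall>i<p. \<forall>s\<in>{a..b}. u i s = (\<Sum>k\<in>F. ipH p {a..b} u (psi k) * psi k i s)"
proof -
  define c where "c k = ipH p {a..b} u (psi k)" for k
  define r where "r = (\<lambda>j t. u j t - (\<Sum>k\<in>F. c k * psi k j t))"
  have pin: "\<And>k. inH p {a..b} (psi k)" using eig unfolding eigensysH_def by blast
  have pon: "\<And>k l. ipH p {a..b} (psi k) (psi l) = (if k = l then 1 else 0)"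
    using eig unfolding eigensysH_def by blast
  have pe: "\<And>k. \<forall>i<p. \<forall>s\<in>{a..b}. covop p {a..b} K (psi k) i s = \<pi>s k * psi k i s"
    using eig unfolding eigensysH_def by blast
  have compl: "\<And>x. inH p {a..b} x \<Longrightarrow> (\<forall>k. ipH p {a..b} x (psi k) = 0) \<Longrightarrow> (\<forall>i<p. \<forall>s\<in>{a..b}. covop p {a..b} K x i s = 0)"
    using eig unfolding eigensysH_def by blast
  have corth: "\<And>l. \<pi>s l \<noteq> lam \<Longrightarrow> c l = 0"
    unfolding c_def by (rule eig_orth[OF eig sym u ueig])
  have lcin: "inH p {a..b} (\<lambda>j t. \<Sum>k\<in>F. c k * psi k j t)" by (rule inH_lc[OF F pin])
  have rin: "inH p {a..b} r" unfolding r_def by (rule inH_diff[OF u lcin])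
  have rorth: "ipH p {a..b} r (psi l) = 0" for l
  proof -
    have "ipH p {a..b} r (psi l) = c l - (\<Sum>k\<in>F. c k * ipH p {a..b} (psi k) (psi l))"
      unfolding r_def using ipH_diff[OF u lcin pin[of l]] ipH_lc[where c=c and v=psi and y="psi l", OF F pin pin] unfolding c_def by simp
    also have "(\<Sum>k\<in>F. c k * ipH p {a..b} (psi k) (psi l)) = (\<Sum>k\<in>F. if k = l then c k else 0)"
      by (rule sum.cong) (simp_all add: pon)
    also have "\<dots> = (if l \<in> F then c l else 0)" using F by (simp add: sum.delta)
    finally show ?thesis using FF corth by (cases "l \<in> F") auto
  qed
  have cr0: "\<forall>i<p. \<forall>s\<in>{a..b}. covop p {a..b} K r i s = 0"
    using compl[OF rin] rorth by blast
  show ?thesis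
  proof (intro allI impI ballI)
    fix i s assume i: "i < p" and s: "s \<in> {a..b}"
    have "covop p {a..b} K r i s = covop p {a..b} K u i s - (\<Sum>k\<in>F. c k * covop p {a..b} K (psi k) i s)"
      unfolding r_def by (rule covop_lin[OF int[unfolded Hint_def] F pin u i s])
    also have "\<dots> = lam * u i s - (\<Sum>k\<in>F. c k * (\<pi>s k * psi k i s))"
      using ueig pe i s by simp
    also have "(\<Sum>k\<in>F. c k * (\<pi>s k * psi k i s)) = (\<Sum>k\<in>F. lam * (c k * psi k i s))"
    proof (rule sum.cong[OF refl])
      fix k assume "k \<in> F"
      show "c k * (\<pi>s k * psi k i s) = lam * (c k * psi k i s)"
        by (cases "\<pi>s k = lam") (simp_all add: corth)
    qed
    also have "lam * u i s - (\<Sum>k\<in>F. lam * (c k * psi k i s)) = lam * r i s"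
      unfolding r_def by (simp add: sum_distrib_left right_diff_distrib)
    finally have "lam * r i s = 0" using cr0 i s by simp
    hence "r i s = 0" using lam0 by simp
    thus "u i s = (\<Sum>k\<in>F. ipH p {a..b} u (psi k) * psi k i s)"
      unfolding r_def c_def by simp
  qed
qed



lemma kmeas: assumes c: "continuous_on ({a..b} \<times> {a..b}) (\<lambda>z. k (fst z) (snd z) :: real)"
  shows "(\<lambda>z. k (fst z) (snd z)) \<in> borel_measurable (lebesgue_on {a..b::real} \<Otimes>\<^sub>M lebesgue_on {a..b})"
proof -
  have i1: "(\<lambda>x. x) \<in> lebesgue_on {a..b} \<rightarrow>\<^sub>M (borel :: real measure)"
    by (rule continuous_imp_measurable_on_sets_lebesgue) (auto intro: continuous_on_id)
  have "(\<lambda>z. (fst z, snd z)) \<in> (lebesgue_on {a..b} \<Otimes>\<^sub>M lebesgue_on {a..b}) \<rightarrow>\<^sub>M (borel \<Otimes>\<^sub>M borel :: (real \<times> real) measure)"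
    by (rule measurable_Pair) (rule measurable_compose[OF measurable_fst i1], rule measurable_compose[OF measurable_snd i1])
  hence i2: "(\<lambda>z. z) \<in> (lebesgue_on {a..b} \<Otimes>\<^sub>M lebesgue_on {a..b}) \<rightarrow>\<^sub>M (borel :: (real \<times> real) measure)"
    by (simp add: borel_prod)
  have i3: "(\<lambda>z. z) \<in> (lebesgue_on {a..b} \<Otimes>\<^sub>M lebesgue_on {a..b}) \<rightarrow>\<^sub>M restrict_space borel ({a..b} \<times> {a..b})"
    by (rule measurable_restrict_space2[OF _ i2]) (simp add: space_pair_measure)
  show ?thesis
    using measurable_compose[OF i3 borel_measurable_continuous_on_restrict[OF c]] by simp
qed

lemma cont_bound: assumes c: "continuous_on ({a..b} \<times> {a..b}) (\<lambda>z. k (fst z) (snd z) :: real)"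
  shows "\<exists>B. \<forall>s\<in>{a..b::real}. \<forall>t\<in>{a..b}. \<bar>k s t\<bar> \<le> B"
proof -
  have "compact ((\<lambda>z. k (fst z) (snd z)) ` ({a..b} \<times> {a..b}))"
    by (rule compact_continuous_image[OF c]) (intro compact_Times compact_Icc)
  hence "bounded ((\<lambda>z. k (fst z) (snd z)) ` ({a..b} \<times> {a..b}))" by (rule compact_imp_bounded)
  then obtain B where "\<forall>x\<in>(\<lambda>z. k (fst z) (snd z)) ` ({a..b} \<times> {a..b}). norm x \<le> B"
    unfolding bounded_iff by blast
  thus ?thesis by force
qed

lemma cont_slice1: assumes c: "continuous_on ({a..b} \<times> {a..b}) (\<lambda>z. k (fst z) (snd z) :: real)"
  and s: "s \<in> {a..b}" shows "continuous_on {a..b} (\<lambda>t. k s t)"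
proof -
  have "continuous_on {a..b} (\<lambda>t. (\<lambda>z. k (fst z) (snd z)) ((\<lambda>t. (s, t)) t))"
    by (rule continuous_on_compose2[OF c]) (use s in \<open>auto intro!: continuous_intros\<close>)
  thus ?thesis by simp
qed

lemma AC1:
  assumes c: "continuous_on ({a..b} \<times> {a..b}) (\<lambda>z. k (fst z) (snd z) :: real)"
    and s: "s \<in> {a..b}" and f: "L2 {a..b} f"
  shows "integrable (lebesgue_on {a..b}) (\<lambda>t. k s t * f t)"
proof -
  obtain B where B: "\<forall>s\<in>{a..b}. \<forall>t\<in>{a..b}. \<bar>k s t\<bar> \<le> B" using cont_bound[OF c] by blast
  have fi: "integrable (lebesgue_on {a..b}) f" by (rule L2_integrable[OF f])
  have i: "integrable (lebesgue_on {a..b}) (\<lambda>t. B * \<bar>f t\<bar>)"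
    by (intro integrable_mult_right integrable_abs fi)
  have km: "(\<lambda>t. k s t) \<in> borel_measurable (lebesgue_on {a..b})"
    by (rule continuous_imp_measurable_on_sets_lebesgue[OF cont_slice1[OF c s]]) simp
  have fm: "f \<in> borel_measurable (lebesgue_on {a..b})" using f unfolding L2_def by blast
  show ?thesis
  proof (rule Bochner_Integration.integrable_bound[OF i])
    show "(\<lambda>t. k s t * f t) \<in> borel_measurable (lebesgue_on {a..b})"
      using km fm by (rule borel_measurable_times)
    show "AE x in lebesgue_on {a..b}. norm (k s x * f x) \<le> norm (B * \<bar>f x\<bar>)"
    proof (rule AE_I2)
      fix x assume x: "x \<in> space (lebesgue_on {a..b})"
      hence "\<bar>k s x\<bar> \<le> B" using B s by simp
      hence "\<bar>k s x\<bar> * \<bar>f x\<bar> \<le> B * \<bar>f x\<bar>" by (rule mult_right_mono) simp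
      moreover have "0 \<le> B" using \<open>\<bar>k s x\<bar> \<le> B\<close> by linarith
      ultimately show "norm (k s x * f x) \<le> norm (B * \<bar>f x\<bar>)" by (simp add: abs_mult)
    qed
  qed
qed

lemma AC2:
  assumes c: "continuous_on ({a..b} \<times> {a..b}) (\<lambda>z. k (fst z) (snd z) :: real)"
    and f: "L2 {a..b} f" and g: "L2 {a..b} g"
  shows "integrable (lebesgue_on {a..b}) (\<lambda>s. intop {a..b} k f s * g s)"
    and "ip1 {a..b} (intop {a..b} k f) g = ip1 {a..b} f (intop {a..b} (\<lambda>s t. k t s) g)"
proof -
  let ?M = "lebesgue_on {a..b}"
  interpret fm: finite_measure ?M by (rule fm_ab)
  interpret ps: pair_sigma_finite ?M ?M
    unfolding pair_sigma_finite_def using fm.sigma_finite_measure_axioms by simp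
  obtain B where B: "\<forall>s\<in>{a..b}. \<forall>t\<in>{a..b}. \<bar>k s t\<bar> \<le> B" using cont_bound[OF c] by blast
  have fi: "integrable ?M f" by (rule L2_integrable[OF f])
  have gi: "integrable ?M g" by (rule L2_integrable[OF g])
  have fm: "f \<in> borel_measurable ?M" using f unfolding L2_def by blast
  have gm: "g \<in> borel_measurable ?M" using g unfolding L2_def by blast
  have fsm: "(\<lambda>z. f (snd z)) \<in> borel_measurable (?M \<Otimes>\<^sub>M ?M)" by (rule measurable_compose[OF measurable_snd fm])
  have gfm: "(\<lambda>z. g (fst z)) \<in> borel_measurable (?M \<Otimes>\<^sub>M ?M)" by (rule measurable_compose[OF measurable_fst gm])
  define G where "G = (\<lambda>z. \<bar>g (fst z)\<bar> * \<bar>f (snd z)\<bar>)"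
  have Gm: "G \<in> borel_measurable (?M \<Otimes>\<^sub>M ?M)" unfolding G_def
    by (intro borel_measurable_times borel_measurable_abs fsm gfm)
  have Gi: "integrable (?M \<Otimes>\<^sub>M ?M) G"
  proof (rule ps.Fubini_integrable[OF Gm])
    have "(\<lambda>x. \<integral>y. norm (G (x, y)) \<partial>?M) = (\<lambda>x. \<bar>g x\<bar> * (\<integral>y. \<bar>f y\<bar> \<partial>?M))"
      unfolding G_def by (simp add: abs_mult)
    moreover have "integrable ?M (\<lambda>x. \<bar>g x\<bar> * (\<integral>y. \<bar>f y\<bar> \<partial>?M))"
      by (intro integrable_mult_left integrable_abs gi)
    ultimately show "integrable ?M (\<lambda>x. \<integral>y. norm (G (x, y)) \<partial>?M)" by simp
    show "AE x in ?M. integrable ?M (\<lambda>y. G (x, y))"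
      unfolding G_def by (intro AE_I2) (simp add: integrable_abs fi)
  qed
  define H where "H = (\<lambda>s t. k s t * f t * g s)"
  have km: "(\<lambda>z. k (fst z) (snd z)) \<in> borel_measurable (?M \<Otimes>\<^sub>M ?M)" by (rule kmeas[OF c])
  have Hm: "case_prod H \<in> borel_measurable (?M \<Otimes>\<^sub>M ?M)"
    unfolding H_def case_prod_beta' by (intro borel_measurable_times km fsm gfm)
  have Hi: "integrable (?M \<Otimes>\<^sub>M ?M) (case_prod H)"
  proof (rule Bochner_Integration.integrable_bound[where f="\<lambda>z. B * G z"])
    show "integrable (?M \<Otimes>\<^sub>M ?M) (\<lambda>z. B * G z)" by (intro integrable_mult_right Gi)
    show "case_prod H \<in> borel_measurable (?M \<Otimes>\<^sub>M ?M)" by (rule Hm)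
    show "AE z in ?M \<Otimes>\<^sub>M ?M. norm (case_prod H z) \<le> norm (B * G z)"
    proof (rule AE_I2)
      fix z assume z: "z \<in> space (?M \<Otimes>\<^sub>M ?M)"
      obtain s t where zst: "z = (s, t)" by (cases z)
      have st: "s \<in> {a..b}" "t \<in> {a..b}" using z zst by (auto simp: space_pair_measure)
      have kb: "\<bar>k s t\<bar> \<le> B" using B st by simp
      have "\<bar>k s t\<bar> * (\<bar>f t\<bar> * \<bar>g s\<bar>) \<le> B * (\<bar>f t\<bar> * \<bar>g s\<bar>)" by (rule mult_right_mono[OF kb]) simp
      moreover have "0 \<le> B" using kb by linarith
      ultimately show "norm (case_prod H z) \<le> norm (B * G z)"
        unfolding zst H_def G_def by (simp add: abs_mult mult_ac)
    qed
  qed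
  have e1: "(\<lambda>s. \<integral>t. H s t \<partial>?M) = (\<lambda>s. intop {a..b} k f s * g s)"
    unfolding H_def intop_def by (simp add: integral_mult_left_zero)
  show "integrable ?M (\<lambda>s. intop {a..b} k f s * g s)"
    using ps.integrable_fst[OF Hi] unfolding e1 .
  have e2: "(\<lambda>t. \<integral>s. H s t \<partial>?M) = (\<lambda>t. f t * intop {a..b} (\<lambda>s t. k t s) g t)"
    unfolding H_def intop_def
    by (rule ext) (simp add: integral_mult_left_zero integral_mult_right_zero mult_ac)
  have "(\<integral>t. (\<integral>s. H s t \<partial>?M) \<partial>?M) = (\<integral>s. (\<integral>t. H s t \<partial>?M) \<partial>?M)"
    by (rule ps.Fubini_integral[OF Hi])
  thus "ip1 {a..b} (intop {a..b} k f) g = ip1 {a..b} f (intop {a..b} (\<lambda>s t. k t s) g)"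
    unfolding ip1_def e1 e2 by simp
qed



definition sqi :: "'a measure \<Rightarrow> ('a \<Rightarrow> real) \<Rightarrow> bool" where
  "sqi M f \<longleftrightarrow> f \<in> borel_measurable M \<and> integrable M (\<lambda>x. (f x)\<^sup>2)"

lemma sqi_mult: "sqi M f \<Longrightarrow> sqi M g \<Longrightarrow> integrable M (\<lambda>t. f t * g t)"
proof -
  assume f: "sqi M f" and g: "sqi M g"
  have i: "integrable M (\<lambda>t. (f t)\<^sup>2 + (g t)\<^sup>2)"
    using f g unfolding sqi_def by (metis Bochner_Integration.integrable_add)
  show ?thesis
  proof (rule Bochner_Integration.integrable_bound[OF i])
    show "(\<lambda>t. f t * g t) \<in> borel_measurable M"
      using f g unfolding sqi_def by (metis borel_measurable_times)
    show "AE x in M. norm (f x * g x) \<le> norm ((f x)\<^sup>2 + (g x)\<^sup>2)"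
    proof (rule AE_I2)
      fix x
      have "0 \<le> (f x)\<^sup>2 + (g x)\<^sup>2" by simp
      thus "norm (f x * g x) \<le> norm ((f x)\<^sup>2 + (g x)\<^sup>2)" using abs_mult_le_sq[of "f x" "g x"] by simp
    qed
  qed
qed

lemma sqi_diff: "sqi M f \<Longrightarrow> sqi M g \<Longrightarrow> sqi M (\<lambda>t. f t - g t)"
proof -
  assume f: "sqi M f" and g: "sqi M g"
  have m: "(\<lambda>t. f t - g t) \<in> borel_measurable M"
    using f g unfolding sqi_def by (metis borel_measurable_diff)
  have i: "integrable M (\<lambda>t. 2*(f t)\<^sup>2 + 2*(g t)\<^sup>2)"
    using f g unfolding sqi_def by (metis Bochner_Integration.integrable_add integrable_mult_right)
  have "integrable M (\<lambda>t. (f t - g t)\<^sup>2)"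
  proof (rule Bochner_Integration.integrable_bound[OF i])
    show "(\<lambda>t. (f t - g t)\<^sup>2) \<in> borel_measurable M" using m by (rule borel_measurable_power)
    show "AE x in M. norm ((f x - g x)\<^sup>2) \<le> norm (2 * (f x)\<^sup>2 + 2 * (g x)\<^sup>2)"
      by (rule AE_I2) (rule sq_diff_le_norm)
  qed
  thus ?thesis using m unfolding sqi_def by blast
qed

lemma sqi_const: "finite_measure M \<Longrightarrow> sqi M (\<lambda>x. c)"
  unfolding sqi_def by (simp add: finite_measure.integrable_const)

lemma sqi_integrable: "finite_measure M \<Longrightarrow> sqi M f \<Longrightarrow> integrable M f"
  unfolding sqi_def using finite_measure.square_integrable_imp_integrable by blast

lemma CS:
  assumes U: "sqi M U" and V: "sqi M V"
  shows "(\<integral>x. U x * V x \<partial>M)\<^sup>2 \<le> (\<integral>x. (U x)\<^sup>2 \<partial>M) * (\<integral>x. (V x)\<^sup>2 \<partial>M)"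
proof -
  define A where "A = (\<integral>x. (U x)\<^sup>2 \<partial>M)"
  define B where "B = (\<integral>x. U x * V x \<partial>M)"
  define C where "C = (\<integral>x. (V x)\<^sup>2 \<partial>M)"
  have iU: "integrable M (\<lambda>x. (U x)\<^sup>2)" using U unfolding sqi_def by blast
  have iV: "integrable M (\<lambda>x. (V x)\<^sup>2)" using V unfolding sqi_def by blast
  have iUV: "integrable M (\<lambda>x. U x * V x)" by (rule sqi_mult[OF U V])
  have C0: "0 \<le> C" unfolding C_def by (intro integral_nonneg_AE AE_I2) simp
  have key: "0 \<le> A - 2 * r * B + r\<^sup>2 * C" for r
  proof -
    have "0 \<le> (\<integral>x. (U x - r * V x)\<^sup>2 \<partial>M)" by (intro integral_nonneg_AE AE_I2) simp
    also have "(\<integral>x. (U x - r * V x)\<^sup>2 \<partial>M) = (\<integral>x. (U x)\<^sup>2 - (2 * r) * (U x * V x) + r\<^sup>2 * (V x)\<^sup>2 \<partial>M)"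
      by (rule Bochner_Integration.integral_cong) (simp_all add: power2_eq_square algebra_simps)
    also have "\<dots> = (\<integral>x. (U x)\<^sup>2 - (2 * r) * (U x * V x) \<partial>M) + (\<integral>x. r\<^sup>2 * (V x)\<^sup>2 \<partial>M)"
      by (rule Bochner_Integration.integral_add) (use iU iUV iV in auto)
    also have "(\<integral>x. (U x)\<^sup>2 - (2 * r) * (U x * V x) \<partial>M) = A - (\<integral>x. (2 * r) * (U x * V x) \<partial>M)"
      unfolding A_def by (rule Bochner_Integration.integral_diff) (use iU iUV in auto)
    finally show ?thesis unfolding B_def C_def by simp
  qed
  show ?thesis
  proof (cases "C = 0")
    case True
    show ?thesis
    proof (cases "B = 0")
      case True thus ?thesis using \<open>C = 0\<close> unfolding B_def C_def by simp
    next
      case False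
      have "0 \<le> A - 2 * ((A + 1) / (2 * B)) * B" using key[of "(A + 1) / (2 * B)"] \<open>C = 0\<close> by simp
      also have "\<dots> = -1" using False by (simp add: field_simps)
      finally show ?thesis by simp
    qed
  next
    case False
    hence Cp: "0 < C" using C0 by simp
    have "0 \<le> A - 2 * (B / C) * B + (B / C)\<^sup>2 * C" by (rule key)
    also have "\<dots> = A - B\<^sup>2 / C" using Cp by (simp add: field_simps power2_eq_square)
    finally have "B\<^sup>2 / C \<le> A" by simp
    hence "B\<^sup>2 \<le> A * C" using Cp by (simp add: field_simps)
    thus ?thesis unfolding A_def B_def C_def .
  qed
qed

lemma CS_abs:
  assumes U: "sqi M U" and V: "sqi M V"
  shows "\<bar>\<integral>x. U x * V x \<partial>M\<bar> \<le> sqrt ((\<integral>x. (U x)\<^sup>2 \<partial>M) * (\<integral>x. (V x)\<^sup>2 \<partial>M))"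
proof -
  have "\<bar>\<integral>x. U x * V x \<partial>M\<bar> = sqrt ((\<integral>x. U x * V x \<partial>M)\<^sup>2)" by simp
  also have "\<dots> \<le> sqrt ((\<integral>x. (U x)\<^sup>2 \<partial>M) * (\<integral>x. (V x)\<^sup>2 \<partial>M))"
    by (rule real_sqrt_le_mono[OF CS[OF U V]])
  finally show ?thesis .
qed


lemma tendsto_fst_within:
  fixes x0 y0 :: real and S S' :: "real set"
  assumes g: "(g \<longlongrightarrow> 0) (at x0 within S)" and g0: "g x0 = (0::real)" and y0: "y0 \<in> S'"
  shows "((\<lambda>z. g (fst z)) \<longlongrightarrow> 0) (at (x0, y0) within S \<times> S')"
proof -
  have c1: "continuous (at (x0, y0) within S \<times> S') fst" by (intro continuous_intros)
  have c2: "continuous (at (fst (x0, y0)) within fst ` (S \<times> S')) g"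
    using g g0 y0 by (auto simp: continuous_within fst_image_times)
  have "continuous (at (x0, y0) within S \<times> S') (\<lambda>z. g (fst z))"
    by (rule continuous_within_compose2[OF c1 c2])
  thus ?thesis using g0 by (simp add: continuous_within)
qed

lemma tendsto_snd_within:
  fixes x0 y0 :: real and S S' :: "real set"
  assumes g: "(g \<longlongrightarrow> 0) (at y0 within S')" and g0: "g y0 = (0::real)" and x0: "x0 \<in> S"
  shows "((\<lambda>z. g (snd z)) \<longlongrightarrow> 0) (at (x0, y0) within S \<times> S')"
proof -
  have c1: "continuous (at (x0, y0) within S \<times> S') snd" by (intro continuous_intros)
  have c2: "continuous (at (snd (x0, y0)) within snd ` (S \<times> S')) g"
    using g g0 x0 by (auto simp: continuous_within snd_image_times)
  have "continuous (at (x0, y0) within S \<times> S') (\<lambda>z. g (snd z))"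
    by (rule continuous_within_compose2[OF c1 c2])
  thus ?thesis using g0 by (simp add: continuous_within)
qed

lemma sq_le_2: "(y::real)\<^sup>2 \<le> 2 * y0\<^sup>2 + 2 * (y - y0)\<^sup>2"
proof -
  have "0 \<le> (y - 2 * y0)\<^sup>2" by simp
  thus ?thesis by (simp add: power2_eq_square algebra_simps)
qed

locale procl =
  fixes P :: "'w measure" and p :: nat and a b :: real and X :: "'w \<Rightarrow> nat \<Rightarrow> real \<Rightarrow> real"
  assumes proc: "L2_cont_process P p {a..b} X"
begin

lemma PS: "prob_space P" using proc unfolding L2_cont_process_def by blast

lemma FM: "finite_measure P" using PS by (simp add: prob_space_def)

lemma int_const: "(\<integral>w. c \<partial>P) = (c::real)"
  using prob_space.prob_space[OF PS] by (simp add: lebesgue_integral_const)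

lemma sqX: "j < p \<Longrightarrow> t \<in> {a..b} \<Longrightarrow> sqi P (\<lambda>w. X w j t)"
  using proc unfolding L2_cont_process_def sqi_def by blast

lemma Dlim: "j < p \<Longrightarrow> t \<in> {a..b} \<Longrightarrow> ((\<lambda>s. \<integral>w. (X w j s - X w j t)\<^sup>2 \<partial>P) \<longlongrightarrow> 0) (at t within {a..b})"
  using proc unfolding L2_cont_process_def by blast

lemma sqY: "j < p \<Longrightarrow> t \<in> {a..b} \<Longrightarrow> sqi P (\<lambda>w. X w j t - c)"
  by (rule sqi_diff[OF sqX sqi_const[OF FM]])

lemma D_nonneg: fixes f :: "'w \<Rightarrow> real" shows "0 \<le> (\<integral>w. (f w)\<^sup>2 \<partial>P)"
  by (intro integral_nonneg_AE AE_I2) simp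

lemma mu_bound:
  assumes j: "j < p" and s: "s \<in> {a..b}" and t: "t \<in> {a..b}"
  shows "(mean_fun P X j s - mean_fun P X j t)\<^sup>2 \<le> (\<integral>w. (X w j s - X w j t)\<^sup>2 \<partial>P)"
proof -
  have U: "sqi P (\<lambda>w. X w j s - X w j t)" by (rule sqi_diff[OF sqX[OF j s] sqX[OF j t]])
  have "mean_fun P X j s - mean_fun P X j t = (\<integral>w. X w j s - X w j t \<partial>P)"
    unfolding mean_fun_def
    by (rule Bochner_Integration.integral_diff[symmetric]) (rule sqi_integrable[OF FM sqX], fact+)+
  also have "\<dots> = (\<integral>w. (X w j s - X w j t) * 1 \<partial>P)" by simp
  finally have "(mean_fun P X j s - mean_fun P X j t)\<^sup>2 \<le> (\<integral>w. (X w j s - X w j t)\<^sup>2 \<partial>P) * (\<integral>w. 1\<^sup>2 \<partial>P)"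
    using CS[OF U sqi_const[OF FM, of 1]] by simp
  thus ?thesis using int_const[of "1::real"] by simp
qed

lemma mu_cont:
  assumes j: "j < p" shows "continuous_on {a..b} (mean_fun P X j)"
  unfolding continuous_on_def
proof
  fix t assume t: "t \<in> {a..b}"
  have "((\<lambda>s. mean_fun P X j s - mean_fun P X j t) \<longlongrightarrow> 0) (at t within {a..b})"
  proof (rule Lim_null_comparison)
    show "\<forall>\<^sub>F s in at t within {a..b}. norm (mean_fun P X j s - mean_fun P X j t) \<le> sqrt (\<integral>w. (X w j s - X w j t)\<^sup>2 \<partial>P)"
      unfolding eventually_at_filter
    proof (rule always_eventually, intro allI impI)
      fix s assume "s \<in> {a..b}"
      hence "sqrt ((mean_fun P X j s - mean_fun P X j t)\<^sup>2) \<le> sqrt (\<integral>w. (X w j s - X w j t)\<^sup>2 \<partial>P)"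
        using mu_bound[OF j _ t] real_sqrt_le_mono by blast
      thus "norm (mean_fun P X j s - mean_fun P X j t) \<le> sqrt (\<integral>w. (X w j s - X w j t)\<^sup>2 \<partial>P)" by simp
    qed
    show "((\<lambda>s. sqrt (\<integral>w. (X w j s - X w j t)\<^sup>2 \<partial>P)) \<longlongrightarrow> 0) (at t within {a..b})"
      using tendsto_real_sqrt[OF Dlim[OF j t]] by simp
  qed
  thus "(mean_fun P X j \<longlongrightarrow> mean_fun P X j t) (at t within {a..b})" by (rule LIM_zero_cancel)
qed


lemma DY_le:
  assumes j: "j < p" and s: "s \<in> {a..b}" and s0: "s0 \<in> {a..b}"
  shows "(\<integral>w. ((X w j s - mean_fun P X j s) - (X w j s0 - mean_fun P X j s0))\<^sup>2 \<partial>P)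
         \<le> 4 * (\<integral>w. (X w j s - X w j s0)\<^sup>2 \<partial>P)"
proof -
  define c where "c = mean_fun P X j s - mean_fun P X j s0"
  define D where "D = (\<integral>w. (X w j s - X w j s0)\<^sup>2 \<partial>P)"
  have U: "sqi P (\<lambda>w. X w j s - X w j s0)" by (rule sqi_diff[OF sqX[OF j s] sqX[OF j s0]])
  have iU: "integrable P (\<lambda>w. (X w j s - X w j s0)\<^sup>2)" using U unfolding sqi_def by blast
  have L: "sqi P (\<lambda>w. (X w j s - mean_fun P X j s) - (X w j s0 - mean_fun P X j s0))"
    by (rule sqi_diff[OF sqY[OF j s] sqY[OF j s0]])
  have iL: "integrable P (\<lambda>w. ((X w j s - mean_fun P X j s) - (X w j s0 - mean_fun P X j s0))\<^sup>2)"
    using L unfolding sqi_def by blast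
  have iR: "integrable P (\<lambda>w. 2 * (X w j s - X w j s0)\<^sup>2 + 2 * c\<^sup>2)"
    by (intro Bochner_Integration.integrable_add integrable_mult_right iU finite_measure.integrable_const FM)
  have "(\<integral>w. ((X w j s - mean_fun P X j s) - (X w j s0 - mean_fun P X j s0))\<^sup>2 \<partial>P)
      \<le> (\<integral>w. 2 * (X w j s - X w j s0)\<^sup>2 + 2 * c\<^sup>2 \<partial>P)"
  proof (rule integral_mono[OF iL iR])
    fix w
    have e: "((X w j s - mean_fun P X j s) - (X w j s0 - mean_fun P X j s0)) = (X w j s - X w j s0) - c"
      unfolding c_def by simp
    show "((X w j s - mean_fun P X j s) - (X w j s0 - mean_fun P X j s0))\<^sup>2 \<le> 2 * (X w j s - X w j s0)\<^sup>2 + 2 * c\<^sup>2"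
      unfolding e by (rule sq_diff_le)
  qed
  also have "(\<integral>w. 2 * (X w j s - X w j s0)\<^sup>2 + 2 * c\<^sup>2 \<partial>P) = 2 * D + 2 * c\<^sup>2"
    unfolding D_def
    by (subst Bochner_Integration.integral_add) (use iU FM prob_space.prob_space[OF PS] in \<open>auto simp: int_const finite_measure.integrable_const\<close>)
  also have "\<dots> \<le> 4 * D" using mu_bound[OF j s s0] unfolding c_def D_def by simp
  finally show ?thesis unfolding D_def .
qed

lemma VY_le:
  assumes j: "j < p" and t: "t \<in> {a..b}" and t0: "t0 \<in> {a..b}"
  shows "(\<integral>w. (X w j t - mean_fun P X j t)\<^sup>2 \<partial>P)
         \<le> 2 * (\<integral>w. (X w j t0 - mean_fun P X j t0)\<^sup>2 \<partial>P)
           + 2 * (\<integral>w. ((X w j t - mean_fun P X j t) - (X w j t0 - mean_fun P X j t0))\<^sup>2 \<partial>P)"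
proof -
  have A: "sqi P (\<lambda>w. X w j t - mean_fun P X j t)" by (rule sqY[OF j t])
  have B: "sqi P (\<lambda>w. X w j t0 - mean_fun P X j t0)" by (rule sqY[OF j t0])
  have C: "sqi P (\<lambda>w. (X w j t - mean_fun P X j t) - (X w j t0 - mean_fun P X j t0))" by (rule sqi_diff[OF A B])
  have iA: "integrable P (\<lambda>w. (X w j t - mean_fun P X j t)\<^sup>2)" using A unfolding sqi_def by blast
  have iB: "integrable P (\<lambda>w. (X w j t0 - mean_fun P X j t0)\<^sup>2)" using B unfolding sqi_def by blast
  have iC: "integrable P (\<lambda>w. ((X w j t - mean_fun P X j t) - (X w j t0 - mean_fun P X j t0))\<^sup>2)" using C unfolding sqi_def by blast
  have "(\<integral>w. (X w j t - mean_fun P X j t)\<^sup>2 \<partial>P)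
      \<le> (\<integral>w. 2 * (X w j t0 - mean_fun P X j t0)\<^sup>2 + 2 * ((X w j t - mean_fun P X j t) - (X w j t0 - mean_fun P X j t0))\<^sup>2 \<partial>P)"
    by (rule integral_mono[OF iA]) (use iB iC sq_le_2 in auto)
  also have "\<dots> = 2 * (\<integral>w. (X w j t0 - mean_fun P X j t0)\<^sup>2 \<partial>P)
           + 2 * (\<integral>w. ((X w j t - mean_fun P X j t) - (X w j t0 - mean_fun P X j t0))\<^sup>2 \<partial>P)"
    by (subst Bochner_Integration.integral_add) (use iB iC in auto)
  finally show ?thesis .
qed

lemma K_diff:
  assumes i: "i < p" and j: "j < p" and s: "s \<in> {a..b}" and s0: "s0 \<in> {a..b}" and t: "t \<in> {a..b}" and t0: "t0 \<in> {a..b}"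
  shows "cov_kernel P X i j s t - cov_kernel P X i j s0 t0
    = (\<integral>w. ((X w i s - mean_fun P X i s) - (X w i s0 - mean_fun P X i s0)) * (X w j t - mean_fun P X j t) \<partial>P)
    + (\<integral>w. (X w i s0 - mean_fun P X i s0) * ((X w j t - mean_fun P X j t) - (X w j t0 - mean_fun P X j t0)) \<partial>P)"
proof -
  have Ys: "sqi P (\<lambda>w. X w i s - mean_fun P X i s)" by (rule sqY[OF i s])
  have Ys0: "sqi P (\<lambda>w. X w i s0 - mean_fun P X i s0)" by (rule sqY[OF i s0])
  have Yt: "sqi P (\<lambda>w. X w j t - mean_fun P X j t)" by (rule sqY[OF j t])
  have Yt0: "sqi P (\<lambda>w. X w j t0 - mean_fun P X j t0)" by (rule sqY[OF j t0])
  have "cov_kernel P X i j s t - cov_kernel P X i j s0 t0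
      = (\<integral>w. (X w i s - mean_fun P X i s) * (X w j t - mean_fun P X j t) - (X w i s0 - mean_fun P X i s0) * (X w j t0 - mean_fun P X j t0) \<partial>P)"
    unfolding cov_kernel_def
    by (rule Bochner_Integration.integral_diff[symmetric]) (rule sqi_mult, fact+)+
  also have "\<dots> = (\<integral>w. ((X w i s - mean_fun P X i s) - (X w i s0 - mean_fun P X i s0)) * (X w j t - mean_fun P X j t)
        + (X w i s0 - mean_fun P X i s0) * ((X w j t - mean_fun P X j t) - (X w j t0 - mean_fun P X j t0)) \<partial>P)"
    by (rule Bochner_Integration.integral_cong) (simp_all add: algebra_simps)
  also have "\<dots> = (\<integral>w. ((X w i s - mean_fun P X i s) - (X w i s0 - mean_fun P X i s0)) * (X w j t - mean_fun P X j t) \<partial>P)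
    + (\<integral>w. (X w i s0 - mean_fun P X i s0) * ((X w j t - mean_fun P X j t) - (X w j t0 - mean_fun P X j t0)) \<partial>P)"
    by (rule Bochner_Integration.integral_add) (rule sqi_mult[OF sqi_diff[OF Ys Ys0] Yt], rule sqi_mult[OF Ys0 sqi_diff[OF Yt Yt0]])
  finally show ?thesis .
qed


lemma K_cont:
  assumes i: "i < p" and j: "j < p"
  shows "continuous_on ({a..b} \<times> {a..b}) (\<lambda>z. cov_kernel P X i j (fst z) (snd z))"
  unfolding continuous_on_def
proof
  fix z0 assume z0: "z0 \<in> {a..b} \<times> {a..b}"
  obtain s0 t0 where zst: "z0 = (s0, t0)" by (cases z0)
  have s0: "s0 \<in> {a..b}" and t0: "t0 \<in> {a..b}" using z0 zst by auto
  define Di where "Di s = (\<integral>w. (X w i s - X w i s0)\<^sup>2 \<partial>P)" for s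
  define Dj where "Dj t = (\<integral>w. (X w j t - X w j t0)\<^sup>2 \<partial>P)" for t
  define VYi0 where "VYi0 = (\<integral>w. (X w i s0 - mean_fun P X i s0)\<^sup>2 \<partial>P)"
  define VYj0 where "VYj0 = (\<integral>w. (X w j t0 - mean_fun P X j t0)\<^sup>2 \<partial>P)"
  define Bd where "Bd z = sqrt ((4 * Di (fst z)) * (2 * VYj0 + 2 * (4 * Dj (snd z)))) + sqrt (VYi0 * (4 * Dj (snd z)))" for z
  let ?K = "\<lambda>z. cov_kernel P X i j (fst z) (snd z)"
  have ineq: "\<bar>?K (s, t) - ?K (s0, t0)\<bar> \<le> Bd (s, t)" if s: "s \<in> {a..b}" and t: "t \<in> {a..b}" for s t
  proof -
    have Ys: "sqi P (\<lambda>w. X w i s - mean_fun P X i s)" by (rule sqY[OF i s])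
    have Ys0: "sqi P (\<lambda>w. X w i s0 - mean_fun P X i s0)" by (rule sqY[OF i s0])
    have Yt: "sqi P (\<lambda>w. X w j t - mean_fun P X j t)" by (rule sqY[OF j t])
    have Yt0: "sqi P (\<lambda>w. X w j t0 - mean_fun P X j t0)" by (rule sqY[OF j t0])
    define A where "A = (\<integral>w. ((X w i s - mean_fun P X i s) - (X w i s0 - mean_fun P X i s0))\<^sup>2 \<partial>P)"
    define Vt where "Vt = (\<integral>w. (X w j t - mean_fun P X j t)\<^sup>2 \<partial>P)"
    define C where "C = (\<integral>w. ((X w j t - mean_fun P X j t) - (X w j t0 - mean_fun P X j t0))\<^sup>2 \<partial>P)"
    have A0: "0 \<le> A" unfolding A_def by (rule D_nonneg)
    have C0: "0 \<le> C" unfolding C_def by (rule D_nonneg)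
    have V0: "0 \<le> Vt" unfolding Vt_def by (rule D_nonneg)
    have Vi0: "0 \<le> VYi0" unfolding VYi0_def by (rule D_nonneg)
    have Vj0: "0 \<le> VYj0" unfolding VYj0_def by (rule D_nonneg)
    have Ale: "A \<le> 4 * Di s" unfolding A_def Di_def by (rule DY_le[OF i s s0])
    have Cle: "C \<le> 4 * Dj t" unfolding C_def Dj_def by (rule DY_le[OF j t t0])
    have Vle: "Vt \<le> 2 * VYj0 + 2 * C" unfolding Vt_def VYj0_def C_def by (rule VY_le[OF j t t0])
    have e: "?K (s, t) - ?K (s0, t0)
      = (\<integral>w. ((X w i s - mean_fun P X i s) - (X w i s0 - mean_fun P X i s0)) * (X w j t - mean_fun P X j t) \<partial>P)
      + (\<integral>w. (X w i s0 - mean_fun P X i s0) * ((X w j t - mean_fun P X j t) - (X w j t0 - mean_fun P X j t0)) \<partial>P)"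
      using K_diff[OF i j s s0 t t0] by simp
    have b1: "\<bar>\<integral>w. ((X w i s - mean_fun P X i s) - (X w i s0 - mean_fun P X i s0)) * (X w j t - mean_fun P X j t) \<partial>P\<bar>
       \<le> sqrt (A * Vt)"
      unfolding A_def Vt_def by (rule CS_abs[OF sqi_diff[OF Ys Ys0] Yt])
    have b2: "\<bar>\<integral>w. (X w i s0 - mean_fun P X i s0) * ((X w j t - mean_fun P X j t) - (X w j t0 - mean_fun P X j t0)) \<partial>P\<bar>
       \<le> sqrt (VYi0 * C)"
      unfolding VYi0_def C_def by (rule CS_abs[OF Ys0 sqi_diff[OF Yt Yt0]])
    have "A * Vt \<le> (4 * Di s) * (2 * VYj0 + 2 * (4 * Dj t))"
      by (rule mult_mono[OF Ale]) (use Vle Cle A0 V0 Ale in auto)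
    hence b1': "sqrt (A * Vt) \<le> sqrt ((4 * Di s) * (2 * VYj0 + 2 * (4 * Dj t)))" by (rule real_sqrt_le_mono)
    have "VYi0 * C \<le> VYi0 * (4 * Dj t)" by (rule mult_left_mono[OF Cle Vi0])
    hence b2': "sqrt (VYi0 * C) \<le> sqrt (VYi0 * (4 * Dj t))" by (rule real_sqrt_le_mono)
    have tri: "\<bar>?K (s, t) - ?K (s0, t0)\<bar> \<le> \<bar>\<integral>w. ((X w i s - mean_fun P X i s) - (X w i s0 - mean_fun P X i s0)) * (X w j t - mean_fun P X j t) \<partial>P\<bar>
      + \<bar>\<integral>w. (X w i s0 - mean_fun P X i s0) * ((X w j t - mean_fun P X j t) - (X w j t0 - mean_fun P X j t0)) \<partial>P\<bar>"
      unfolding e by (rule abs_triangle_ineq)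
    have "Bd (s, t) = sqrt ((4 * Di s) * (2 * VYj0 + 2 * (4 * Dj t))) + sqrt (VYi0 * (4 * Dj t))"
      unfolding Bd_def by simp
    thus ?thesis using tri b1 b2 b1' b2' by linarith
  qed
  have li: "((\<lambda>z. Di (fst z)) \<longlongrightarrow> 0) (at (s0, t0) within {a..b} \<times> {a..b})"
    by (rule tendsto_fst_within[OF _ _ t0]) (use Dlim[OF i s0] in \<open>simp_all add: Di_def\<close>)
  have lj: "((\<lambda>z. Dj (snd z)) \<longlongrightarrow> 0) (at (s0, t0) within {a..b} \<times> {a..b})"
    by (rule tendsto_snd_within[OF _ _ s0]) (use Dlim[OF j t0] in \<open>simp_all add: Dj_def\<close>)
  have lB: "(Bd \<longlongrightarrow> sqrt ((4 * 0) * (2 * VYj0 + 2 * (4 * 0))) + sqrt (VYi0 * (4 * 0))) (at (s0, t0) within {a..b} \<times> {a..b})"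
    unfolding Bd_def[abs_def] by (intro tendsto_intros li lj)
  have "((\<lambda>z. ?K z - ?K z0) \<longlongrightarrow> 0) (at z0 within {a..b} \<times> {a..b})"
  proof (rule Lim_null_comparison)
    show "\<forall>\<^sub>F z in at z0 within {a..b} \<times> {a..b}. norm (?K z - ?K z0) \<le> Bd z"
      unfolding eventually_at_filter
    proof (rule always_eventually, intro allI impI)
      fix z assume "z \<in> {a..b} \<times> {a..b}"
      then obtain s t where "z = (s, t)" "s \<in> {a..b}" "t \<in> {a..b}" by auto
      thus "norm (?K z - ?K z0) \<le> Bd z" using ineq zst by simp
    qed
    show "(Bd \<longlongrightarrow> 0) (at z0 within {a..b} \<times> {a..b})" using lB zst by simp
  qed
  thus "(?K \<longlongrightarrow> ?K z0) (at z0 within {a..b} \<times> {a..b})" by (rule LIM_zero_cancel)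
qed

end



lemma L2_continuous: "continuous_on {a..b} f \<Longrightarrow> L2 {a..b} f"
  unfolding L2_def
proof
  assume c: "continuous_on {a..b} f"
  show "f \<in> borel_measurable (lebesgue_on {a..b})"
    by (rule continuous_imp_measurable_on_sets_lebesgue[OF c]) simp
  have "continuous_on {a..b} (\<lambda>t. (f t)\<^sup>2)" by (intro continuous_intros c)
  thus "integrable (lebesgue_on {a..b}) (\<lambda>t. (f t)\<^sup>2)" by (rule continuous_imp_integrable_real)
qed

lemma ip1_sum_left:
  assumes J: "finite J" and i: "\<And>j. j \<in> J \<Longrightarrow> integrable (lebesgue_on T) (\<lambda>s. F j s * g s)"
  shows "ip1 T (\<lambda>s. \<Sum>j\<in>J. F j s) g = (\<Sum>j\<in>J. ip1 T (F j) g)"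
  unfolding ip1_def sum_distrib_right
  by (rule Bochner_Integration.integral_sum) (rule i)

lemma ip1_zero2: "ip1 T f (\<lambda>t. 0) = 0"
  unfolding ip1_def by simp

lemma downclosed_finite:
  fixes S :: "nat set"
  assumes fin: "finite S" and dc: "\<And>x y. x \<in> S \<Longrightarrow> y \<le> x \<Longrightarrow> y \<in> S"
  shows "S = {..<card S}"
proof -
  have sub: "S \<subseteq> {..<card S}"
  proof
    fix x assume x: "x \<in> S"
    have "{..x} \<subseteq> S" using dc x by auto
    hence "card {..x} \<le> card S" by (rule card_mono[OF fin])
    thus "x \<in> {..<card S}" by simp
  qed
  show ?thesis by (rule card_subset_eq) (use sub in auto)
qed

lemma bessel:
  assumes I: "finite I" and v: "\<And>i. i \<in> I \<Longrightarrow> inH p {a..b} (v i)"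
    and on: "\<And>i i'. i \<in> I \<Longrightarrow> i' \<in> I \<Longrightarrow> ipH p {a..b} (v i) (v i') = (if i = i' then 1 else 0)"
    and y: "inH p {a..b} y"
  shows "(\<Sum>i\<in>I. (ipH p {a..b} y (v i))\<^sup>2) \<le> ipH p {a..b} y y"
proof -
  define d where "d i = ipH p {a..b} y (v i)" for i
  define z where "z = (\<lambda>j t. y j t - (\<Sum>i\<in>I. d i * v i j t))"
  have lcin: "inH p {a..b} (\<lambda>j t. \<Sum>i\<in>I. d i * v i j t)" by (rule inH_lc[OF I v])
  have zin: "inH p {a..b} z" unfolding z_def by (rule inH_diff[OF y lcin])
  have zv: "ipH p {a..b} z (v i) = 0" if i: "i \<in> I" for i
  proof -
    have "ipH p {a..b} z (v i) = d i - (\<Sum>i'\<in>I. d i' * ipH p {a..b} (v i') (v i))"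
      unfolding z_def using ipH_diff[OF y lcin v[OF i]] ipH_lc[where c=d and v=v and y="v i", OF I v v[OF i]]
      unfolding d_def by simp
    also have "(\<Sum>i'\<in>I. d i' * ipH p {a..b} (v i') (v i)) = (\<Sum>i'\<in>I. if i' = i then d i' else 0)"
      by (rule sum.cong) (simp_all add: on i)
    also have "\<dots> = d i" using I i by (simp add: sum.delta)
    finally show ?thesis by simp
  qed
  have "0 \<le> ipH p {a..b} z z" by (rule ipH_self_nonneg)
  also have "ipH p {a..b} z z = ipH p {a..b} y z - (\<Sum>i\<in>I. d i * ipH p {a..b} (v i) z)"
    unfolding z_def[of] using ipH_diff[OF y lcin zin] ipH_lc[where c=d and v=v and y=z, OF I v zin]
    by (simp add: z_def)
  also have "(\<Sum>i\<in>I. d i * ipH p {a..b} (v i) z) = 0"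
    by (rule sum.neutral) (simp add: ipH_sym[of p _ "v _" z] zv)
  also have "ipH p {a..b} y z = ipH p {a..b} y y - (\<Sum>i\<in>I. d i * d i)"
  proof -
    have "ipH p {a..b} y z = ipH p {a..b} z y" by (rule ipH_sym)
    also have "\<dots> = ipH p {a..b} y y - (\<Sum>i\<in>I. d i * ipH p {a..b} (v i) y)"
      unfolding z_def using ipH_diff[OF y lcin y] ipH_lc[where c=d and v=v and y=y, OF I v y] by simp
    also have "(\<Sum>i\<in>I. d i * ipH p {a..b} (v i) y) = (\<Sum>i\<in>I. d i * d i)"
      unfolding d_def by (simp add: ipH_sym)
    finally show ?thesis .
  qed
  finally show ?thesis unfolding d_def by (simp add: power2_eq_square)
qed


locale mainl = procl P p a b X for P :: "'w measure" and p a b X +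
  fixes \<pi>s :: "nat \<Rightarrow> real" and psi :: "nat \<Rightarrow> nat \<Rightarrow> real \<Rightarrow> real"
    and lam :: "nat \<Rightarrow> nat \<Rightarrow> real" and xi :: "nat \<Rightarrow> nat \<Rightarrow> real \<Rightarrow> real"
    and M :: nat and m :: "nat \<Rightarrow> nat"
  assumes uncorr: "\<forall>i<p. \<forall>j<p. i \<noteq> j \<longrightarrow> (\<forall>s\<in>{a..b}. \<forall>t\<in>{a..b}. cov_kernel P X i j s t = 0)"
    and eigC: "eigensysH p {a..b} (cov_kernel P X) \<pi>s psi"
    and eigK: "\<forall>j<p. eigensys1 {a..b} (cov_kernel P X j j) (lam j) (xi j)"
    and M0: "0 < M" and gap: "\<pi>s (M - 1) > \<pi>s M" and pos: "\<pi>s (M - 1) > 0"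
    and m_def: "\<forall>j<p. m j = card {i. i < M \<and> lam j i \<in> \<pi>s ` {..<M}}"
begin

lemma cov_sym: "cov_kernel P X i j t s = cov_kernel P X j i s t"
  unfolding cov_kernel_def by (simp add: mult.commute)

lemma covop_diag:
  assumes i: "i < p" and s: "s \<in> {a..b}"
  shows "covop p {a..b} (cov_kernel P X) x i s = intop {a..b} (cov_kernel P X i i) (x i) s"
proof -
  have "covop p {a..b} (cov_kernel P X) x i s = (\<Sum>j<p. if j = i then intop {a..b} (cov_kernel P X i i) (x i) s else 0)"
    unfolding covop_def
  proof (rule sum.cong[OF refl])
    fix j assume j: "j \<in> {..<p}"
    show "(\<integral>t. cov_kernel P X i j s t * x j t \<partial>lebesgue_on {a..b}) = (if j = i then intop {a..b} (cov_kernel P X i i) (x i) s else 0)"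
    proof (cases "j = i")
      case True thus ?thesis unfolding intop_def by simp
    next
      case False
      have "(\<integral>t. cov_kernel P X i j s t * x j t \<partial>lebesgue_on {a..b}) = (\<integral>t. 0 \<partial>lebesgue_on {a..b})"
        by (rule Bochner_Integration.integral_cong) (use uncorr i j s False in auto)
      thus ?thesis using False by simp
    qed
  qed
  also have "\<dots> = intop {a..b} (cov_kernel P X i i) (x i) s" using i by (simp add: sum.delta)
  finally show ?thesis .
qed

lemma Kc: "i < p \<Longrightarrow> j < p \<Longrightarrow> continuous_on ({a..b} \<times> {a..b}) (\<lambda>z. cov_kernel P X i j (fst z) (snd z))"
  by (rule K_cont)

lemma Hint_K: "Hint p a b (cov_kernel P X)"
  unfolding Hint_def inH_def by (auto intro!: AC1 Kc)

lemma intop_sym: "intop {a..b} (\<lambda>s t. cov_kernel P X i j t s) g = intop {a..b} (cov_kernel P X j i) g"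
  unfolding intop_def by (simp add: cov_sym)

lemma Hsym_K: "Hsym p a b (cov_kernel P X)"
  unfolding Hsym_def
proof (intro allI impI)
  fix x y assume x: "inH p {a..b} x" and y: "inH p {a..b} y"
  have xj: "\<And>j. j < p \<Longrightarrow> L2 {a..b} (x j)" and yj: "\<And>j. j < p \<Longrightarrow> L2 {a..b} (y j)"
    using x y unfolding inH_def by auto
  have cov: "\<And>z i s. covop p {a..b} (cov_kernel P X) z i s = (\<Sum>j<p. intop {a..b} (cov_kernel P X i j) (z j) s)"
    unfolding covop_def intop_def by simp
  have "ipH p {a..b} (\<lambda>i s. covop p {a..b} (cov_kernel P X) x i s) y
      = (\<Sum>i<p. \<Sum>j<p. ip1 {a..b} (intop {a..b} (cov_kernel P X i j) (x j)) (y i))"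
    unfolding ipH_def cov
    by (intro sum.cong refl ip1_sum_left) (auto intro!: AC2(1) Kc xj yj)
  also have "\<dots> = (\<Sum>i<p. \<Sum>j<p. ip1 {a..b} (x j) (intop {a..b} (cov_kernel P X j i) (y i)))"
    by (intro sum.cong refl) (simp add: AC2(2)[OF Kc xj yj] intop_sym)
  also have "\<dots> = (\<Sum>j<p. \<Sum>i<p. ip1 {a..b} (intop {a..b} (cov_kernel P X j i) (y i)) (x j))"
    by (subst sum.swap) (simp add: ip1_sym)
  also have "\<dots> = ipH p {a..b} x (\<lambda>i s. covop p {a..b} (cov_kernel P X) y i s)"
    unfolding ipH_def cov
    by (subst ip1_sym, intro sum.cong refl ip1_sum_left[symmetric]) (auto intro!: AC2(1) Kc xj yj)
  finally show "ipH p {a..b} (\<lambda>i s. covop p {a..b} (cov_kernel P X) x i s) y = ipH p {a..b} x (\<lambda>i s. covop p {a..b} (cov_kernel P X) y i s)" .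
qed


lemma covop1: "covop 1 {a..b} (\<lambda>_ _. k) x i s = intop {a..b} k (x 0) s"
  unfolding covop_def intop_def by simp

lemma ipH1: "ipH 1 T x y = ip1 T (x 0) (y 0)"
  unfolding ipH_def by simp

lemma inH1: "inH 1 T x = L2 T (x 0)"
  unfolding inH_def by simp

lemma xi_facts:
  assumes j: "j < p"
  shows "\<And>i. L2 {a..b} (xi j i)"
    and "\<And>i i'. ip1 {a..b} (xi j i) (xi j i') = (if i = i' then 1 else 0)"
    and "\<And>i s. s \<in> {a..b} \<Longrightarrow> intop {a..b} (cov_kernel P X j j) (xi j i) s = lam j i * xi j i s"
    and "decseq (lam j)"
    and "\<And>f. L2 {a..b} f \<Longrightarrow> (\<forall>i. ip1 {a..b} f (xi j i) = 0) \<Longrightarrow> (\<forall>s\<in>{a..b}. intop {a..b} (cov_kernel P X j j) f s = 0)"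
  using eigK j unfolding eigensys1_def by blast+

lemma eig1: assumes j: "j < p"
  shows "eigensysH 1 {a..b} (\<lambda>_ _. cov_kernel P X j j) (lam j) (\<lambda>i _. xi j i)"
  unfolding eigensysH_def covop1 ipH1 inH1
  using xi_facts[OF j] by simp

lemma Hint1: assumes j: "j < p" shows "Hint 1 a b (\<lambda>_ _. cov_kernel P X j j)"
  unfolding Hint_def inH1 using Kc[OF j j] by (auto intro!: AC1)

lemma Hsym1: assumes j: "j < p" shows "Hsym 1 a b (\<lambda>_ _. cov_kernel P X j j)"
  unfolding Hsym_def inH1 ipH1 covop1
proof (intro allI impI)
  fix x y :: "nat \<Rightarrow> real \<Rightarrow> real" assume x: "L2 {a..b} (x 0)" and y: "L2 {a..b} (y 0)"
  show "ip1 {a..b} (intop {a..b} (cov_kernel P X j j) (x 0)) (y 0) = ip1 {a..b} (x 0) (intop {a..b} (cov_kernel P X j j) (y 0))"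
    using AC2(2)[OF Kc[OF j j] x y] by (simp add: intop_sym)
qed

definition emb :: "nat \<Rightarrow> nat \<Rightarrow> nat \<Rightarrow> real \<Rightarrow> real" where
  "emb j i = (\<lambda>j' t. if j' = j then xi j i t else 0)"

lemma emb_in: "j < p \<Longrightarrow> inH p {a..b} (emb j i)"
  unfolding inH_def emb_def
proof (intro allI impI)
  fix j' assume j: "j < p" and j': "j' < p"
  show "L2 {a..b} (\<lambda>t. if j' = j then xi j i t else 0)"
    by (cases "j' = j") (simp_all add: xi_facts(1)[OF j] L2_zero)
qed

lemma ipH_emb: assumes j: "j < p" shows "ipH p {a..b} z (emb j i) = ip1 {a..b} (z j) (xi j i)"
proof -
  have "ipH p {a..b} z (emb j i) = (\<Sum>j'<p. if j' = j then ip1 {a..b} (z j) (xi j i) else 0)"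
    unfolding ipH_def emb_def by (intro sum.cong refl) (simp add: ip1_zero2)
  thus ?thesis using j by (simp add: sum.delta)
qed

lemma emb_on: assumes j: "j < p" and j': "j' < p"
  shows "ipH p {a..b} (emb j i) (emb j' i') = (if (j, i) = (j', i') then 1 else 0)"
  unfolding ipH_emb[OF j'] using xi_facts(2)[OF j]
  by (cases "j' = j") (auto simp: emb_def ip1_zero)

lemma emb_eig: assumes j: "j < p"
  shows "\<forall>i'<p. \<forall>s\<in>{a..b}. covop p {a..b} (cov_kernel P X) (emb j i) i' s = lam j i * emb j i i' s"
proof (intro allI impI ballI)
  fix i' s assume i': "i' < p" and s: "s \<in> {a..b}"
  show "covop p {a..b} (cov_kernel P X) (emb j i) i' s = lam j i * emb j i i' s"
    unfolding covop_diag[OF i' s] using xi_facts(3)[OF j s] by (auto simp: emb_def intop_def)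
qed

lemma psi_facts:
  shows "\<And>k. inH p {a..b} (psi k)"
    and "\<And>k l. ipH p {a..b} (psi k) (psi l) = (if k = l then 1 else 0)"
    and "\<And>k. \<forall>i<p. \<forall>s\<in>{a..b}. covop p {a..b} (cov_kernel P X) (psi k) i s = \<pi>s k * psi k i s"
    and "decseq \<pi>s"
  using eigC unfolding eigensysH_def by blast+

lemma psi_eig1: assumes j: "j < p" and s: "s \<in> {a..b}"
  shows "intop {a..b} (cov_kernel P X j j) (psi k j) s = \<pi>s k * psi k j s"
proof -
  have "covop p {a..b} (cov_kernel P X) (psi k) j s = \<pi>s k * psi k j s" using psi_facts(3)[of k] j s by blast
  thus ?thesis using covop_diag[OF j s, of "psi k"] by simp
qed


lemma pi_ge: "k < M \<Longrightarrow> \<pi>s (M - 1) \<le> \<pi>s k"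
  using psi_facts(4) by (simp add: decseq_def)

lemma pi_lt: "M \<le> k \<Longrightarrow> \<pi>s k < \<pi>s (M - 1)"
proof -
  assume "M \<le> k"
  hence "\<pi>s k \<le> \<pi>s M" using psi_facts(4) by (simp add: decseq_def)
  thus ?thesis using gap by simp
qed

lemma Fsub: assumes ge: "\<pi>s (M - 1) \<le> \<nu>" shows "{k. \<pi>s k = \<nu>} \<subseteq> {..<M}"
proof
  fix k assume k: "k \<in> {k. \<pi>s k = \<nu>}"
  show "k \<in> {..<M}"
  proof (rule ccontr)
    assume "k \<notin> {..<M}"
    hence "\<pi>s k < \<pi>s (M - 1)" using pi_lt by simp
    thus False using k ge by simp
  qed
qed

lemma Lam_ge: "\<nu> \<in> \<pi>s ` {..<M} \<Longrightarrow> \<pi>s (M - 1) \<le> \<nu>"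
  using pi_ge by auto

lemma Lam_pos: "\<nu> \<in> \<pi>s ` {..<M} \<Longrightarrow> 0 < \<nu>"
  using Lam_ge pos by force

lemma emb_expand:
  assumes j: "j < p" and ge: "\<pi>s (M - 1) \<le> lam j i" and F: "finite F" and FF: "{k. \<pi>s k = lam j i} \<subseteq> F"
  shows "\<forall>i'<p. \<forall>s\<in>{a..b}. emb j i i' s = (\<Sum>k\<in>F. ipH p {a..b} (emb j i) (psi k) * psi k i' s)"
proof (rule GL[OF eigC Hint_K Hsym_K _ F FF emb_in[OF j] emb_eig[OF j]])
  show "lam j i \<noteq> 0" using ge pos by simp
qed

lemma ipH_zero: "ipH p T (\<lambda>j t. 0) y = 0"
  unfolding ipH_def by (simp add: ip1_zero)

lemma lam_in_Lam:
  assumes j: "j < p" and ge: "\<pi>s (M - 1) \<le> lam j i"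
  shows "lam j i \<in> \<pi>s ` {..<M}"
proof (rule ccontr)
  assume nin: "lam j i \<notin> \<pi>s ` {..<M}"
  have empty: "{k. \<pi>s k = lam j i} \<subseteq> {}"
  proof
    fix k assume "k \<in> {k. \<pi>s k = lam j i}"
    hence "\<pi>s k = lam j i" "k < M" using Fsub[OF ge] by auto
    hence "lam j i \<in> \<pi>s ` {..<M}" by (metis imageI lessThan_iff)
    thus "k \<in> {}" using nin by blast
  qed
  have z: "\<forall>i'<p. \<forall>s\<in>{a..b}. emb j i i' s = 0"
    using emb_expand[OF j ge _ empty] by simp
  have "ipH p {a..b} (emb j i) (emb j i) = ipH p {a..b} (\<lambda>j t. 0) (emb j i)"
    by (rule ipH_cong) (use z in simp)
  also have "\<dots> = 0" by (rule ipH_zero)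
  finally show False using emb_on[OF j j, of i i] by simp
qed

lemma Lam_iff: "j < p \<Longrightarrow> (lam j i \<in> \<pi>s ` {..<M}) = (\<pi>s (M - 1) \<le> lam j i)"
  using lam_in_Lam Lam_ge by blast

lemma S_card:
  assumes j: "j < p" and I: "finite I" and IS: "I \<subseteq> {i. \<pi>s (M - 1) \<le> lam j i}"
  shows "card I \<le> M"
proof -
  define c where "c i k = ipH p {a..b} (emb j i) (psi k)" for i k
  have one: "(\<Sum>k<M. (c i k)\<^sup>2) = 1" if i: "i \<in> I" for i
  proof -
    have ge: "\<pi>s (M - 1) \<le> lam j i" using IS i by auto
    have ex: "\<forall>i'<p. \<forall>s\<in>{a..b}. emb j i i' s = (\<Sum>k\<in>{..<M}. c i k * psi k i' s)"
      unfolding c_def by (rule emb_expand[OF j ge _ Fsub[OF ge]]) simp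
    have "1 = ipH p {a..b} (emb j i) (emb j i)" using emb_on[OF j j, of i i] by simp
    also have "\<dots> = ipH p {a..b} (\<lambda>i' s. \<Sum>k\<in>{..<M}. c i k * psi k i' s) (emb j i)"
      by (rule ipH_cong) (use ex in simp)
    also have "\<dots> = (\<Sum>k\<in>{..<M}. c i k * ipH p {a..b} (psi k) (emb j i))"
      by (rule ipH_lc[OF _ psi_facts(1) emb_in[OF j]]) simp
    also have "\<dots> = (\<Sum>k<M. (c i k)\<^sup>2)"
      unfolding c_def by (intro sum.cong refl) (metis ipH_sym power2_eq_square)
    finally show ?thesis by simp
  qed
  have bes: "(\<Sum>i\<in>I. (c i k)\<^sup>2) \<le> 1" for k
  proof -
    have "(\<Sum>i\<in>I. (ipH p {a..b} (psi k) (emb j i))\<^sup>2) \<le> ipH p {a..b} (psi k) (psi k)"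
      by (rule bessel[OF I emb_in[OF j] _ psi_facts(1)]) (simp add: emb_on[OF j j])
    moreover have "(\<Sum>i\<in>I. (ipH p {a..b} (psi k) (emb j i))\<^sup>2) = (\<Sum>i\<in>I. (c i k)\<^sup>2)"
      unfolding c_def by (intro sum.cong refl) (metis ipH_sym)
    ultimately show ?thesis using psi_facts(2)[of k k] by simp
  qed
  have "real (card I) = (\<Sum>i\<in>I. \<Sum>k<M. (c i k)\<^sup>2)" using one by simp
  also have "\<dots> = (\<Sum>k<M. \<Sum>i\<in>I. (c i k)\<^sup>2)" by (rule sum.swap)
  also have "\<dots> \<le> (\<Sum>k<M. 1)" by (rule sum_mono) (rule bes)
  finally show ?thesis by simp
qed

lemma S_fin: assumes j: "j < p" shows "finite {i. \<pi>s (M - 1) \<le> lam j i}"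
proof (rule ccontr)
  assume "infinite {i. \<pi>s (M - 1) \<le> lam j i}"
  then obtain I where "I \<subseteq> {i. \<pi>s (M - 1) \<le> lam j i}" "finite I" "card I = Suc M"
    using infinite_arbitrarily_large by blast
  moreover from S_card[OF j \<open>finite I\<close> \<open>I \<subseteq> _\<close>] have "card I \<le> M" .
  ultimately show False by simp
qed

lemma S_eq: assumes j: "j < p" shows "{i. \<pi>s (M - 1) \<le> lam j i} = {..<m j}"
proof -
  let ?S = "{i. \<pi>s (M - 1) \<le> lam j i}"
  have dec: "decseq (lam j)" by (rule xi_facts(4)[OF j])
  have Sd: "?S = {..<card ?S}"
  proof (rule downclosed_finite[OF S_fin[OF j]])
    fix x y assume "x \<in> ?S" "y \<le> x"
    thus "y \<in> ?S" using dec by (auto simp: decseq_def intro: order_trans)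
  qed
  have cM: "card ?S \<le> M" by (rule S_card[OF j S_fin[OF j]]) simp
  have "{i. i < M \<and> lam j i \<in> \<pi>s ` {..<M}} = ?S"
  proof -
    have e1: "{i. i < M \<and> lam j i \<in> \<pi>s ` {..<M}} = {i. i < M \<and> i \<in> ?S}" using Lam_iff[OF j] by auto
    have "?S \<subseteq> {..<M}"
    proof
      fix x assume "x \<in> ?S"
      hence "x < card ?S" using Sd by blast
      thus "x \<in> {..<M}" using cM by simp
    qed
    hence "{i. i < M \<and> i \<in> ?S} = ?S" by blast
    thus ?thesis using e1 by simp
  qed
  hence "m j = card ?S" using m_def j by simp
  thus ?thesis using Sd by simp
qed


lemma psi_expand1:
  assumes j: "j < p" and nu: "\<nu> \<noteq> 0" and G: "finite G" and GG: "{i. lam j i = \<nu>} \<subseteq> G" and k: "\<pi>s k = \<nu>"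
  shows "\<forall>s\<in>{a..b}. psi k j s = (\<Sum>i\<in>G. ip1 {a..b} (psi k j) (xi j i) * xi j i s)"
proof -
  have u: "inH 1 {a..b} (\<lambda>_. psi k j)" unfolding inH1 using psi_facts(1)[of k] j by (simp add: inH_def)
  have ue: "\<forall>i<1. \<forall>s\<in>{a..b}. covop 1 {a..b} (\<lambda>_ _. cov_kernel P X j j) (\<lambda>_. psi k j) i s = \<nu> * psi k j s"
    unfolding covop1 using psi_eig1[OF j] k by simp
  note GL[OF eig1[OF j] Hint1[OF j] Hsym1[OF j] nu G GG u ue]
  thus ?thesis unfolding ipH1 by simp
qed

lemma sq_sum: "(\<Sum>k\<in>F. f k)\<^sup>2 = (\<Sum>k\<in>F. \<Sum>l\<in>F. f k * f l :: real)"
  by (simp add: power2_eq_square sum_product)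

lemma PAR:
  assumes nu: "\<nu> \<in> \<pi>s ` {..<M}" and y: "inH p {a..b} y"
  shows "(\<Sum>k\<in>{k. \<pi>s k = \<nu>}. (ipH p {a..b} y (psi k))\<^sup>2)
       = (\<Sum>j<p. \<Sum>i\<in>{i. lam j i = \<nu>}. (ip1 {a..b} (y j) (xi j i))\<^sup>2)"
proof -
  have ge: "\<pi>s (M - 1) \<le> \<nu>" by (rule Lam_ge[OF nu])
  have nu0: "\<nu> \<noteq> 0" using Lam_pos[OF nu] by simp
  define F where "F = {k. \<pi>s k = \<nu>}"
  define G where "G j = {i. lam j i = \<nu>}" for j
  define E where "E = Sigma {..<p} G"
  have Ffin: "finite F" unfolding F_def by (rule finite_subset[OF Fsub[OF ge]]) simp
  have Gsub: "j < p \<Longrightarrow> G j \<subseteq> {..<m j}" for j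
    unfolding G_def using S_eq[of j] ge by auto
  have Gfin: "j < p \<Longrightarrow> finite (G j)" for j by (rule finite_subset[OF Gsub]) simp_all
  have Efin: "finite E" unfolding E_def by (rule finite_SigmaI) (simp_all add: Gfin)
  define A where "A e k = ipH p {a..b} (emb (fst e) (snd e)) (psi k)" for e k
  define Y where "Y k = ipH p {a..b} y (psi k)" for k
  have Ein: "e \<in> E \<Longrightarrow> fst e < p \<and> lam (fst e) (snd e) = \<nu>" for e
    unfolding E_def G_def by auto
  have embin: "e \<in> E \<Longrightarrow> inH p {a..b} (emb (fst e) (snd e))" for e using Ein emb_in by blast
  have claim1: "\<forall>i'<p. \<forall>s\<in>{a..b}. emb (fst e) (snd e) i' s = (\<Sum>k\<in>F. A e k * psi k i' s)" if e: "e \<in> E" for e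
    unfolding A_def using Ein[OF e] ge Ffin by (intro emb_expand) (auto simp: F_def)
  have c1: "ipH p {a..b} y (emb (fst e) (snd e)) = (\<Sum>k\<in>F. A e k * Y k)" if e: "e \<in> E" for e
  proof -
    have "ipH p {a..b} y (emb (fst e) (snd e)) = ipH p {a..b} (emb (fst e) (snd e)) y" by (rule ipH_sym)
    also have "\<dots> = ipH p {a..b} (\<lambda>i' s. \<Sum>k\<in>F. A e k * psi k i' s) y"
      by (rule ipH_cong) (use claim1[OF e] in simp)
    also have "\<dots> = (\<Sum>k\<in>F. A e k * ipH p {a..b} (psi k) y)"
      by (rule ipH_lc[OF Ffin psi_facts(1) y])
    finally show ?thesis unfolding Y_def by (simp add: ipH_sym)
  qed
  have claim2: "\<forall>j'<p. \<forall>s\<in>{a..b}. psi k j' s = (\<Sum>e\<in>E. A e k * emb (fst e) (snd e) j' s)" if k: "k \<in> F" for k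
  proof (intro allI impI ballI)
    fix j' s assume j': "j' < p" and s: "s \<in> {a..b}"
    have "(\<Sum>e\<in>E. A e k * emb (fst e) (snd e) j' s) = (\<Sum>j<p. \<Sum>i\<in>G j. A (j, i) k * emb j i j' s)"
      unfolding E_def by (subst sum.Sigma) (simp_all add: Gfin case_prod_beta')
    also have "\<dots> = (\<Sum>j<p. if j = j' then (\<Sum>i\<in>G j'. ip1 {a..b} (psi k j') (xi j' i) * xi j' i s) else 0)"
    proof (rule sum.cong[OF refl])
      fix j assume j: "j \<in> {..<p}"
      show "(\<Sum>i\<in>G j. A (j, i) k * emb j i j' s) = (if j = j' then (\<Sum>i\<in>G j'. ip1 {a..b} (psi k j') (xi j' i) * xi j' i s) else 0)"
      proof (cases "j = j'")
        case True
        have "A (j, i) k * emb j i j' s = ip1 {a..b} (psi k j') (xi j' i) * xi j' i s" for i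
        proof -
          have "A (j, i) k = ipH p {a..b} (psi k) (emb j i)" unfolding A_def by (simp add: ipH_sym)
          also have "\<dots> = ip1 {a..b} (psi k j') (xi j' i)" using True j by (simp add: ipH_emb)
          finally show ?thesis using True by (simp add: emb_def)
        qed
        thus ?thesis using True by simp
      next
        case False thus ?thesis unfolding emb_def by simp
      qed
    qed
    also have "\<dots> = (\<Sum>i\<in>G j'. ip1 {a..b} (psi k j') (xi j' i) * xi j' i s)" using j' by (simp add: sum.delta')
    also have "\<dots> = psi k j' s"
      using psi_expand1[OF j' nu0 Gfin[OF j'] _ _] k s unfolding G_def F_def by simp
    finally show "psi k j' s = (\<Sum>e\<in>E. A e k * emb (fst e) (snd e) j' s)" by simp
  qed
  have c2: "(\<Sum>e\<in>E. A e k * A e l) = (if k = l then 1 else 0)" if k: "k \<in> F" and l: "l \<in> F" for k l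
  proof -
    have "(if k = l then 1 else 0) = ipH p {a..b} (psi k) (psi l)" by (simp add: psi_facts(2))
    also have "\<dots> = ipH p {a..b} (\<lambda>j' s. \<Sum>e\<in>E. A e k * emb (fst e) (snd e) j' s) (psi l)"
      by (rule ipH_cong) (use claim2[OF k] in simp)
    also have "\<dots> = (\<Sum>e\<in>E. A e k * ipH p {a..b} (emb (fst e) (snd e)) (psi l))"
      by (rule ipH_lc[OF Efin embin psi_facts(1)])
    finally show ?thesis unfolding A_def by simp
  qed
  have "(\<Sum>e\<in>E. (ipH p {a..b} y (emb (fst e) (snd e)))\<^sup>2) = (\<Sum>e\<in>E. (\<Sum>k\<in>F. A e k * Y k)\<^sup>2)"
    by (rule sum.cong[OF refl]) (simp add: c1)
  also have "\<dots> = (\<Sum>e\<in>E. \<Sum>k\<in>F. \<Sum>l\<in>F. Y k * Y l * (A e k * A e l))"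
    unfolding sq_sum by (intro sum.cong refl) (simp add: mult_ac)
  also have "\<dots> = (\<Sum>k\<in>F. \<Sum>l\<in>F. Y k * Y l * (\<Sum>e\<in>E. A e k * A e l))"
    by (simp add: sum.swap[of _ E] sum_distrib_left)
  also have "\<dots> = (\<Sum>k\<in>F. \<Sum>l\<in>F. if l = k then Y k * Y l else 0)"
    by (intro sum.cong refl) (auto simp: c2)
  also have "\<dots> = (\<Sum>k\<in>F. (Y k)\<^sup>2)"
    using Ffin by (simp add: sum.delta' power2_eq_square)
  finally have main: "(\<Sum>e\<in>E. (ipH p {a..b} y (emb (fst e) (snd e)))\<^sup>2) = (\<Sum>k\<in>F. (Y k)\<^sup>2)" .
  have "(\<Sum>e\<in>E. (ipH p {a..b} y (emb (fst e) (snd e)))\<^sup>2) = (\<Sum>j<p. \<Sum>i\<in>G j. (ipH p {a..b} y (emb j i))\<^sup>2)"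
    unfolding E_def by (subst sum.Sigma) (simp_all add: Gfin case_prod_beta')
  also have "\<dots> = (\<Sum>j<p. \<Sum>i\<in>G j. (ip1 {a..b} (y j) (xi j i))\<^sup>2)"
    by (intro sum.cong refl) (simp add: ipH_emb)
  finally show ?thesis using main unfolding F_def G_def Y_def by simp
qed


lemma final:
  assumes w: "w \<in> space P"
  shows "fMMD2 p {a..b} (X w) (mean_fun P X) \<pi>s psi M
       = (\<Sum>j<p. fmd2 {a..b} (X w j) (mean_fun P X j) (lam j) (xi j) (m j))"
proof -
  define y where "y = (\<lambda>j t. X w j t - mean_fun P X j t)"
  define L where "L = \<pi>s ` {..<M}"
  have Lfin: "finite L" unfolding L_def by simp
  have Xw: "inH p {a..b} (X w)" using proc w unfolding L2_cont_process_def by blast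
  have mu: "inH p {a..b} (mean_fun P X)" unfolding inH_def using mu_cont L2_continuous by blast
  have y: "inH p {a..b} y" unfolding y_def by (rule inH_diff[OF Xw mu])
  define h where "h k = (ipH p {a..b} y (psi k))\<^sup>2 / \<pi>s k" for k
  have "fMMD2 p {a..b} (X w) (mean_fun P X) \<pi>s psi M = (\<Sum>k<M. h k)"
    unfolding fMMD2_def h_def y_def ..
  also have "\<dots> = (\<Sum>\<nu>\<in>L. \<Sum>k\<in>{k \<in> {..<M}. \<pi>s k = \<nu>}. h k)"
    unfolding L_def by (rule sum.group[symmetric]) simp_all
  also have "\<dots> = (\<Sum>\<nu>\<in>L. (\<Sum>k\<in>{k. \<pi>s k = \<nu>}. (ipH p {a..b} y (psi k))\<^sup>2) / \<nu>)"
  proof (rule sum.cong[OF refl])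
    fix \<nu> assume nu: "\<nu> \<in> L"
    have "{k \<in> {..<M}. \<pi>s k = \<nu>} = {k. \<pi>s k = \<nu>}"
      using Fsub[OF Lam_ge[OF nu[unfolded L_def]]] by blast
    thus "(\<Sum>k\<in>{k \<in> {..<M}. \<pi>s k = \<nu>}. h k) = (\<Sum>k\<in>{k. \<pi>s k = \<nu>}. (ipH p {a..b} y (psi k))\<^sup>2) / \<nu>"
      unfolding h_def by (simp add: sum_divide_distrib)
  qed
  also have "\<dots> = (\<Sum>\<nu>\<in>L. (\<Sum>j<p. \<Sum>i\<in>{i. lam j i = \<nu>}. (ip1 {a..b} (y j) (xi j i))\<^sup>2) / \<nu>)"
    by (intro sum.cong refl) (simp add: PAR[OF _ y] L_def)
  also have "\<dots> = (\<Sum>j<p. \<Sum>\<nu>\<in>L. (\<Sum>i\<in>{i. lam j i = \<nu>}. (ip1 {a..b} (y j) (xi j i))\<^sup>2) / \<nu>)"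
    by (simp add: sum_divide_distrib sum.swap[of _ L])
  also have "\<dots> = (\<Sum>j<p. fmd2 {a..b} (X w j) (mean_fun P X j) (lam j) (xi j) (m j))"
  proof (rule sum.cong[OF refl])
    fix j assume j: "j \<in> {..<p}"
    hence jp: "j < p" by simp
    define g where "g i = (ip1 {a..b} (y j) (xi j i))\<^sup>2 / lam j i" for i
    have img: "lam j ` {..<m j} \<subseteq> L"
      unfolding L_def using S_eq[OF jp] Lam_iff[OF jp] by blast
    have "fmd2 {a..b} (X w j) (mean_fun P X j) (lam j) (xi j) (m j) = (\<Sum>i<m j. g i)"
      unfolding fmd2_def g_def y_def ..
    also have "\<dots> = (\<Sum>\<nu>\<in>L. \<Sum>i\<in>{i \<in> {..<m j}. lam j i = \<nu>}. g i)"
      by (rule sum.group[symmetric]) (simp_all add: Lfin img)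
    also have "\<dots> = (\<Sum>\<nu>\<in>L. (\<Sum>i\<in>{i. lam j i = \<nu>}. (ip1 {a..b} (y j) (xi j i))\<^sup>2) / \<nu>)"
    proof (rule sum.cong[OF refl])
      fix \<nu> assume nu: "\<nu> \<in> L"
      have "{i \<in> {..<m j}. lam j i = \<nu>} = {i. lam j i = \<nu>}"
        using S_eq[OF jp] Lam_ge[OF nu[unfolded L_def]] by auto
      thus "(\<Sum>i\<in>{i \<in> {..<m j}. lam j i = \<nu>}. g i) = (\<Sum>i\<in>{i. lam j i = \<nu>}. (ip1 {a..b} (y j) (xi j i))\<^sup>2) / \<nu>"
        unfolding g_def by (simp add: sum_divide_distrib)
    qed
    finally show "(\<Sum>\<nu>\<in>L. (\<Sum>i\<in>{i. lam j i = \<nu>}. (ip1 {a..b} (y j) (xi j i))\<^sup>2) / \<nu>)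
        = fmd2 {a..b} (X w j) (mean_fun P X j) (lam j) (xi j) (m j)" by simp
  qed
  finally show ?thesis .
qed

end


theorem lemma2:
  fixes P :: "'w measure" and X :: "'w \<Rightarrow> nat \<Rightarrow> real \<Rightarrow> real"
    and p M :: nat and a b :: real
    and pis :: "nat \<Rightarrow> real" and psi :: "nat \<Rightarrow> nat \<Rightarrow> real \<Rightarrow> real"
    and lam :: "nat \<Rightarrow> nat \<Rightarrow> real" and xi :: "nat \<Rightarrow> nat \<Rightarrow> real \<Rightarrow> real"
    and m :: "nat \<Rightarrow> nat"
  assumes "a < b" and "0 < p"
    and proc: "L2_cont_process P p {a..b} X"
    and uncorr: "\<forall>i<p. \<forall>j<p. i \<noteq> j \<longrightarrow> (\<forall>s\<in>{a..b}. \<forall>t\<in>{a..b}. cov_kernel P X i j s t = 0)"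
    and eigC: "eigensysH p {a..b} (cov_kernel P X) \<pi>s psi"
    and eigK: "\<forall>j<p. eigensys1 {a..b} (cov_kernel P X j j) (lam j) (xi j)"
    and "0 < M" and gap: "\<pi>s (M - 1) > \<pi>s M" and pos: "\<pi>s (M - 1) > 0"
    and m_def: "\<forall>j<p. m j = card {i. i < M \<and> lam j i \<in> \<pi>s ` {..<M}}"
    and sumM: "M = (\<Sum>j<p. m j)"
  shows "\<forall>w\<in>space P.
           fMMD2 p {a..b} (X w) (mean_fun P X) \<pi>s psi M
         = (\<Sum>j<p. fmd2 {a..b} (X w j) (mean_fun P X j) (lam j) (xi j) (m j))"
  proof -
  interpret mainl P p a b X \<pi>s psi lam xi M m
    by unfold_locales (rule proc uncorr eigC eigK gap pos m_def \<open>0 < M\<close>)+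
  show ?thesis using final by blast
qed

end
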